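(* Let $X,Y$ be Banach spaces. Every super-Tauberian operator $T\in\mathcal L(X,Y)$ is strongly Tauberian.
   Context: $T$ is Tauberian if $T^{**}(X^{**}\setminus X)\subset Y^{**}\setminus Y$. For a non-trivial ultrafilter $\mathcal U$ on $\mathbb N$, $X_{\mathcal U}=\ell^\infty(X)/\{(x_j):\lim_{j\in\mathcal U}\|x_j\|=0\}$ with $\|[(x_j)]\|=\lim_{j\in\mathcal U}\|x_j\|$, and $T_{\mathcal U}[(x_j)]=[(Tx_j)]$; $T$ is super-Tauberian if $T_{\mathcal U}$ is Tauberian (independent of $\mathcal U$). $T$ is strongly Tauberian if the induced operator $\widetilde T:X^{**}/X\to Y^{**}/Y$, $\widetilde T(x^{**}+X)=T^{**}x^{**}+Y$, is an (into) isomorphism. *)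

theory Defs
  imports "HOL-Analysis.Analysis"
begin

text \<open>Generic framework: a (semi)normed space given by a carrier V (a linear subspace of
  some ambient space with addition ad and real scaling sc) and a seminorm p.
  The associated normed space is V modulo the null space of p.  Duals and biduals are
  represented by extensional real-valued functions (zero outside their domain).\<close>

definition sdual :: "'v set \<Rightarrow> ('v \<Rightarrow> 'v \<Rightarrow> 'v) \<Rightarrow> (real \<Rightarrow> 'v \<Rightarrow> 'v) \<Rightarrow> ('v \<Rightarrow> real)
    \<Rightarrow> ('v \<Rightarrow> real) set" where
  "sdual V ad sc p = {f.
     (\<forall>x\<in>V. \<forall>y\<in>V. f (ad x y) = f x + f y) \<and>
     (\<forall>c. \<forall>x\<in>V. f (sc c x) = c * f x) \<and>
     (\<exists>C. \<forall>x\<in>V. \<bar>f x\<bar> \<le> C * p x) \<and>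
     (\<forall>x. x \<notin> V \<longrightarrow> f x = 0)}"

definition sdnorm :: "'v set \<Rightarrow> ('v \<Rightarrow> real) \<Rightarrow> ('v \<Rightarrow> real) \<Rightarrow> real" where
  "sdnorm V p f = (SUP x\<in>{x\<in>V. p x \<le> 1}. \<bar>f x\<bar>)"

definition sbidual :: "'v set \<Rightarrow> ('v \<Rightarrow> 'v \<Rightarrow> 'v) \<Rightarrow> (real \<Rightarrow> 'v \<Rightarrow> 'v) \<Rightarrow> ('v \<Rightarrow> real)
    \<Rightarrow> (('v \<Rightarrow> real) \<Rightarrow> real) set" where
  "sbidual V ad sc p = {\<Phi>.
     (\<forall>f\<in>sdual V ad sc p. \<forall>g\<in>sdual V ad sc p. \<Phi> (\<lambda>x. f x + g x) = \<Phi> f + \<Phi> g) \<and>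
     (\<forall>c. \<forall>f\<in>sdual V ad sc p. \<Phi> (\<lambda>x. c * f x) = c * \<Phi> f) \<and>
     (\<exists>C. \<forall>f\<in>sdual V ad sc p. \<bar>\<Phi> f\<bar> \<le> C * sdnorm V p f) \<and>
     (\<forall>f. f \<notin> sdual V ad sc p \<longrightarrow> \<Phi> f = 0)}"

text \<open>Norm on the bidual.\<close>
definition sbdnorm :: "'v set \<Rightarrow> ('v \<Rightarrow> 'v \<Rightarrow> 'v) \<Rightarrow> (real \<Rightarrow> 'v \<Rightarrow> 'v) \<Rightarrow> ('v \<Rightarrow> real)
    \<Rightarrow> (('v \<Rightarrow> real) \<Rightarrow> real) \<Rightarrow> real" where
  "sbdnorm V ad sc p \<Phi> = (SUP f\<in>{f\<in>sdual V ad sc p. sdnorm V p f \<le> 1}. \<bar>\<Phi> f\<bar>)"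

text \<open>Canonical embedding into the bidual.\<close>
definition scanon :: "'v set \<Rightarrow> ('v \<Rightarrow> 'v \<Rightarrow> 'v) \<Rightarrow> (real \<Rightarrow> 'v \<Rightarrow> 'v) \<Rightarrow> ('v \<Rightarrow> real)
    \<Rightarrow> 'v \<Rightarrow> (('v \<Rightarrow> real) \<Rightarrow> real)" where
  "scanon V ad sc p x = (\<lambda>f. if f \<in> sdual V ad sc p then f x else 0)"

text \<open>Second adjoint T** of T : V \<rightarrow> W.\<close>
definition sbiadj :: "'v set \<Rightarrow> ('v \<Rightarrow> 'v \<Rightarrow> 'v) \<Rightarrow> (real \<Rightarrow> 'v \<Rightarrow> 'v) \<Rightarrow> ('v \<Rightarrow> real)
    \<Rightarrow> 'w set \<Rightarrow> ('w \<Rightarrow> 'w \<Rightarrow> 'w) \<Rightarrow> (real \<Rightarrow> 'w \<Rightarrow> 'w) \<Rightarrow> ('w \<Rightarrow> real)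
    \<Rightarrow> ('v \<Rightarrow> 'w) \<Rightarrow> (('v \<Rightarrow> real) \<Rightarrow> real) \<Rightarrow> (('w \<Rightarrow> real) \<Rightarrow> real)" where
  "sbiadj V ad sc p W ad' sc' q T \<Phi> =
     (\<lambda>g. if g \<in> sdual W ad' sc' q then \<Phi> (\<lambda>x. if x \<in> V then g (T x) else 0) else 0)"

text \<open>Tauberian: T**(X** \ X) \<subseteq> Y** \ Y.\<close>
definition stauberian where
  "stauberian V ad sc p W ad' sc' q T \<longleftrightarrow>
     (\<forall>\<Phi>\<in>sbidual V ad sc p. \<Phi> \<notin> scanon V ad sc p ` V \<longrightarrow>
        sbiadj V ad sc p W ad' sc' q T \<Phi> \<notin> scanon W ad' sc' q ` W)"

text \<open>Strongly Tauberian: the induced map X**/X \<rightarrow> Y**/Y, with quotient norms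
  (distance to the canonical image), is bounded below, i.e. an into isomorphism.\<close>
definition sstrongly_tauberian where
  "sstrongly_tauberian V ad sc p W ad' sc' q T \<longleftrightarrow>
     (\<exists>c>0. \<forall>\<Phi>\<in>sbidual V ad sc p.
        c * (INF x\<in>V. sbdnorm V ad sc p (\<lambda>f. \<Phi> f - scanon V ad sc p x f))
          \<le> (INF y\<in>W. sbdnorm W ad' sc' q
                 (\<lambda>g. sbiadj V ad sc p W ad' sc' q T \<Phi> g - scanon W ad' sc' q y g)))"

text \<open>Instances for operators between Banach spaces.\<close>
definition tauberian :: "('a::real_normed_vector \<Rightarrow> 'b::real_normed_vector) \<Rightarrow> bool" where
  "tauberian T \<longleftrightarrow> stauberian UNIV (+) (*\<^sub>R) norm UNIV (+) (*\<^sub>R) norm T"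

definition strongly_tauberian :: "('a::real_normed_vector \<Rightarrow> 'b::real_normed_vector) \<Rightarrow> bool" where
  "strongly_tauberian T \<longleftrightarrow> sstrongly_tauberian UNIV (+) (*\<^sub>R) norm UNIV (+) (*\<^sub>R) norm T"

text \<open>Non-trivial (free) ultrafilters on the natural numbers.\<close>
definition free_ultrafilter_nat :: "nat filter \<Rightarrow> bool" where
  "free_ultrafilter_nat U \<longleftrightarrow> U \<noteq> bot \<and>
     (\<forall>A. eventually (\<lambda>j. j \<in> A) U \<or> eventually (\<lambda>j. j \<notin> A) U) \<and>
     (\<forall>n. \<not> eventually (\<lambda>j. j = n) U)"

text \<open>Ultrapower X_U: \<ell>\<infinity>(X) with seminorm lim_U \<parallel>x_j\<parallel>; quotienting by its null space
  gives X_U.\<close>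
definition linf :: "(nat \<Rightarrow> 'a::real_normed_vector) set" where
  "linf = {x. bounded (range x)}"

definition unorm :: "nat filter \<Rightarrow> (nat \<Rightarrow> 'a::real_normed_vector) \<Rightarrow> real" where
  "unorm U x = Lim U (\<lambda>j. norm (x j))"

definition seq_add :: "(nat \<Rightarrow> 'a::real_normed_vector) \<Rightarrow> (nat \<Rightarrow> 'a) \<Rightarrow> (nat \<Rightarrow> 'a)" where
  "seq_add x y = (\<lambda>j. x j + y j)"

definition seq_scale :: "real \<Rightarrow> (nat \<Rightarrow> 'a::real_normed_vector) \<Rightarrow> (nat \<Rightarrow> 'a)" where
  "seq_scale c x = (\<lambda>j. c *\<^sub>R x j)"

text \<open>T_U [(x_j)] = [(T x_j)] is Tauberian.\<close>
definition super_tauberian_wrt ::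
    "nat filter \<Rightarrow> ('a::real_normed_vector \<Rightarrow> 'b::real_normed_vector) \<Rightarrow> bool" where
  "super_tauberian_wrt U T \<longleftrightarrow>
     stauberian linf seq_add seq_scale (unorm U) linf seq_add seq_scale (unorm U) (\<lambda>x j. T (x j))"

end

theory Submission
  imports Defs "HOL-Library.Function_Algebras"
begin

(* ---- from H.thy ---- *)
lemma hb_basic:
  fixes E M :: "'v::real_vector set" and phi p :: "'v \<Rightarrow> real"
  assumes E0: "0 \<in> E" and Eadd: "\<And>x y. x\<in>E \<Longrightarrow> y\<in>E \<Longrightarrow> x+y \<in> E"
    and Esc: "\<And>c x. x\<in>E \<Longrightarrow> c *\<^sub>R x \<in> E"
    and M0: "0 \<in> M" and MsubE: "M \<subseteq> E"
    and phiadd: "\<And>x y. x\<in>M \<Longrightarrow> y\<in>M \<Longrightarrow> x+y \<in> M \<and> phi (x+y) = phi x + phi y"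
    and phisc: "\<And>c x. x\<in>M \<Longrightarrow> c *\<^sub>R x \<in> M \<and> phi (c *\<^sub>R x) = c * phi x"
    and dom: "\<And>x. x\<in>M \<Longrightarrow> phi x \<le> p x"
    and padd: "\<And>x y. x\<in>E \<Longrightarrow> y\<in>E \<Longrightarrow> p (x+y) \<le> p x + p y"
    and psc: "\<And>c x. x\<in>E \<Longrightarrow> c \<ge> 0 \<Longrightarrow> p (c *\<^sub>R x) = c * p x"
  shows "\<exists>Psi. (\<forall>x\<in>E. \<forall>y\<in>E. Psi (x+y) = Psi x + Psi y) \<and> (\<forall>c. \<forall>x\<in>E. Psi (c *\<^sub>R x) = c * Psi x)
     \<and> (\<forall>x\<in>M. Psi x = phi x) \<and> (\<forall>x\<in>E. Psi x \<le> p x)"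
proof -
  have Eminus: "x \<in> E \<Longrightarrow> y \<in> E \<Longrightarrow> x - y \<in> E" for x y
    using Eadd[of x "(-1) *\<^sub>R y"] Esc[of y "-1"] by simp
  define good where "good S \<longleftrightarrow> (\<forall>x v1 v2. (x,v1)\<in>S \<longrightarrow> (x,v2)\<in>S \<longrightarrow> v1=v2) \<and> fst ` S \<subseteq> E
     \<and> (\<forall>x\<in>M. (x, phi x) \<in> S) \<and> (\<forall>x v. (x,v)\<in>S \<longrightarrow> v \<le> p x)
     \<and> (\<forall>x v y u. (x,v)\<in>S \<longrightarrow> (y,u)\<in>S \<longrightarrow> (x+y, v+u)\<in>S) \<and> (\<forall>c x v. (x,v)\<in>S \<longrightarrow> (c *\<^sub>R x, c * v)\<in>S)"
    for S :: "('v \<times> real) set"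
  define A where "A = {S. good S}"
  have S0: "good {(x, phi x) | x. x\<in>M}"
    unfolding good_def using MsubE phiadd phisc dom by fastforce
  have "\<forall>C\<in>chains A. \<exists>U\<in>A. \<forall>X\<in>C. X \<subseteq> U"
  proof
    fix C assume C: "C \<in> chains A"
    show "\<exists>U\<in>A. \<forall>X\<in>C. X \<subseteq> U"
    proof (cases "C = {}")
      case True then show ?thesis using S0 A_def by auto
    next
      case False
      then obtain X0 where X0: "X0 \<in> C" by auto
      have CA: "C \<subseteq> A" and ch: "\<And>X Y. X\<in>C \<Longrightarrow> Y\<in>C \<Longrightarrow> X \<subseteq> Y \<or> Y \<subseteq> X"
        using C unfolding chains_def chain_subset_def by auto
      have gX: "\<And>X. X \<in> C \<Longrightarrow> good X" using CA A_def by auto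
      have two: "\<exists>Z\<in>C. (a,b)\<in>Z \<and> (c,d)\<in>Z" if h1: "(a,b)\<in>\<Union>C" and h2: "(c,d)\<in>\<Union>C" for a b c d
      proof -
        obtain X where "X\<in>C" "(a,b)\<in>X" using h1 by blast
        moreover obtain Y where "Y\<in>C" "(c,d)\<in>Y" using h2 by blast
        ultimately show ?thesis using ch by blast
      qed
      have "good (\<Union>C)"
        unfolding good_def
      proof (intro conjI allI impI)
        fix x v1 v2 assume "(x,v1)\<in>\<Union>C" "(x,v2)\<in>\<Union>C"
        then obtain Z where "Z\<in>C" "(x,v1)\<in>Z" "(x,v2)\<in>Z" using two by blast
        then show "v1 = v2" using gX[of Z] unfolding good_def by blast
      next
        show "fst ` \<Union>C \<subseteq> E" using gX unfolding good_def by blast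
      next
        show "\<forall>x\<in>M. (x, phi x) \<in> \<Union>C" using gX[OF X0] X0 unfolding good_def by blast
      next
        fix x v assume "(x,v)\<in>\<Union>C" then show "v \<le> p x" using gX unfolding good_def by blast
      next
        fix x v y u assume "(x,v)\<in>\<Union>C" "(y,u)\<in>\<Union>C"
        then obtain Z where "Z\<in>C" "(x,v)\<in>Z" "(y,u)\<in>Z" using two by blast
        moreover have "good Z" using gX \<open>Z\<in>C\<close> by blast
        ultimately have "(x+y, v+u) \<in> Z" unfolding good_def by blast
        then show "(x+y, v+u) \<in> \<Union>C" using \<open>Z\<in>C\<close> by blast
      next
        fix c x v assume "(x,v)\<in>\<Union>C"
        then obtain Z where "Z\<in>C" "(x,v)\<in>Z" by blast
        moreover have "good Z" using gX \<open>Z\<in>C\<close> by blast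
        ultimately have "(c *\<^sub>R x, c * v) \<in> Z" unfolding good_def by blast
        then show "(c *\<^sub>R x, c * v) \<in> \<Union>C" using \<open>Z\<in>C\<close> by blast
      qed
      then show ?thesis using A_def by auto
    qed
  qed
  then obtain S where SA: "S \<in> A" and smax: "\<forall>X\<in>A. S \<subseteq> X \<longrightarrow> X = S"
    using Zorn_Lemma2[of A] by blast
  have gS: "good S" using SA A_def by auto
  have Sfun: "(x,v1)\<in>S \<Longrightarrow> (x,v2)\<in>S \<Longrightarrow> v1=v2" for x v1 v2 using gS unfolding good_def by blast
  have fstS: "fst ` S \<subseteq> E" using gS unfolding good_def by blast
  have SE: "(x,v)\<in>S \<Longrightarrow> x \<in> E" for x v using fstS by (metis fst_conv image_eqI subsetD)
  have SM: "x\<in>M \<Longrightarrow> (x, phi x)\<in>S" for x using gS unfolding good_def by blast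
  have Sdom: "(x,v)\<in>S \<Longrightarrow> v \<le> p x" for x v using gS unfolding good_def by blast
  have Sadd: "(x,v)\<in>S \<Longrightarrow> (y,u)\<in>S \<Longrightarrow> (x+y, v+u)\<in>S" for x v y u using gS unfolding good_def by blast
  have Ssc: "(x,v)\<in>S \<Longrightarrow> (c *\<^sub>R x, c * v)\<in>S" for c x v using gS unfolding good_def by blast
  have phi0: "phi 0 = 0" using phisc[OF M0, of 0] by simp
  have S00: "(0,0) \<in> S" using SM[OF M0] phi0 by simp
  have full: "\<forall>x\<in>E. \<exists>v. (x,v)\<in>S"
  proof (rule ccontr)
    assume "\<not> ?thesis"
    then obtain x0 where x0E: "x0 \<in> E" and x0n: "\<And>v. (x0,v) \<notin> S" by auto
    define L where "L = {v - p (z - x0) | z v. (z,v)\<in>S}"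
    have key: "v1 - p (z1 - x0) \<le> p (z2 + x0) - v2" if h1: "(z1,v1)\<in>S" and h2: "(z2,v2)\<in>S" for z1 v1 z2 v2
    proof -
      have a: "v1 + v2 \<le> p (z1 + z2)" using Sdom[OF Sadd[OF h1 h2]] .
      have e1: "z1 - x0 \<in> E" using Eminus[OF SE[OF h1] x0E] .
      have e2: "z2 + x0 \<in> E" using Eadd[OF SE[OF h2] x0E] .
      have "p ((z1 - x0) + (z2 + x0)) \<le> p (z1 - x0) + p (z2 + x0)" using padd[OF e1 e2] .
      then have "p (z1 + z2) \<le> p (z1 - x0) + p (z2 + x0)" by simp
      then show ?thesis using a by linarith
    qed
    have Lne: "L \<noteq> {}" using S00 unfolding L_def by blast
    have Lb: "l \<le> p (0 + x0) - 0" if lL: "l \<in> L" for l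
    proof -
      obtain z v where "l = v - p (z - x0)" "(z,v)\<in>S" using lL unfolding L_def by blast
      then show ?thesis using key[OF _ S00] by simp
    qed
    have Lbdd: "bdd_above L" unfolding bdd_above_def using Lb by blast
    define c where "c = Sup L"
    have c1: "v - p (z - x0) \<le> c" if "(z,v)\<in>S" for z v
    proof -
      have "v - p (z - x0) \<in> L" unfolding L_def using that by blast
      then show ?thesis unfolding c_def using cSup_upper[OF _ Lbdd] by blast
    qed
    have c2: "c \<le> p (z + x0) - v" if zv: "(z,v)\<in>S" for z v
    proof -
      have "l \<le> p (z + x0) - v" if lL: "l \<in> L" for l
      proof -
        obtain z' v' where "l = v' - p (z' - x0)" "(z',v')\<in>S" using lL unfolding L_def by blast
        then show ?thesis using key[OF _ zv] by simp
      qed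
      then show ?thesis unfolding c_def using cSup_least[OF Lne] by blast
    qed
    define S' where "S' = {(y + t *\<^sub>R x0, v + t*c) | y v t. (y,v)\<in>S}"
    have "good S'"
      unfolding good_def
    proof (intro conjI allI impI)
      fix x w1 w2 assume a1: "(x,w1)\<in>S'" and a2: "(x,w2)\<in>S'"
      obtain y1 v1 t1 where b1: "(y1,v1)\<in>S" "x = y1 + t1 *\<^sub>R x0" "w1 = v1 + t1*c" using a1 S'_def by auto
      obtain y2 v2 t2 where b2: "(y2,v2)\<in>S" "x = y2 + t2 *\<^sub>R x0" "w2 = v2 + t2*c" using a2 S'_def by auto
      have "t1 = t2"
      proof (rule ccontr)
        assume ne: "t1 \<noteq> t2"
        have "(y2 + (-1) *\<^sub>R y1, v2 + (-1) * v1) \<in> S" using Sadd[OF b2(1) Ssc[OF b1(1)]] .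
        then have "((1/(t1-t2)) *\<^sub>R (y2 + (-1) *\<^sub>R y1), (1/(t1-t2)) * (v2 + (-1) * v1)) \<in> S" using Ssc by blast
        then have "((1/(t1-t2)) *\<^sub>R (y2 - y1), (1/(t1-t2)) * (v2 - v1)) \<in> S" by simp
        moreover have "(1/(t1-t2)) *\<^sub>R (y2 - y1) = x0"
        proof -
          have "y2 - y1 = (t1 - t2) *\<^sub>R x0" using b1 b2 by (simp add: algebra_simps)
          then show ?thesis using ne by simp
        qed
        ultimately show False using x0n by metis
      qed
      then have "y1 = y2" using b1 b2 by simp
      then show "w1 = w2" using b1 b2 \<open>t1 = t2\<close> Sfun by auto
    next
      show "fst ` S' \<subseteq> E"
      proof
        fix z assume "z \<in> fst ` S'"
        then obtain q where q: "q \<in> S'" "z = fst q" by blast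
        then obtain y v t where yv: "(y,v)\<in>S" "q = (y + t *\<^sub>R x0, v + t*c)" unfolding S'_def by blast
        then have "z = y + t *\<^sub>R x0" using q by simp
        then show "z \<in> E" using Eadd[OF SE[OF yv(1)] Esc[OF x0E]] by simp
      qed
    next
      show "\<forall>x\<in>M. (x, phi x) \<in> S'"
      proof
        fix x assume "x \<in> M"
        then have "(x + 0 *\<^sub>R x0, phi x + 0 * c) \<in> S'" unfolding S'_def using SM by blast
        then show "(x, phi x) \<in> S'" by simp
      qed
    next
      fix x w assume "(x,w)\<in>S'"
      then obtain y v t where b: "(y,v)\<in>S" "x = y + t *\<^sub>R x0" "w = v + t*c" using S'_def by auto
      have yE: "y \<in> E" using SE b by blast
      show "w \<le> p x"
      proof (cases "t > 0")
        case True
        have "((1/t) *\<^sub>R y, (1/t) * v) \<in> S" using Ssc b by blast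
        then have "c \<le> p ((1/t) *\<^sub>R y + x0) - (1/t) * v" using c2 by blast
        then have "t * c \<le> t * (p ((1/t) *\<^sub>R y + x0) - (1/t) * v)" using True by (intro mult_left_mono) auto
        also have "\<dots> = t * p ((1/t) *\<^sub>R y + x0) - v" using True by (simp add: field_simps)
        finally have i1: "t * c \<le> t * p ((1/t) *\<^sub>R y + x0) - v" .
        have "t * p ((1/t) *\<^sub>R y + x0) = p (t *\<^sub>R ((1/t) *\<^sub>R y + x0))"
          using psc[of "(1/t) *\<^sub>R y + x0" t] True Eadd Esc yE x0E by simp
        also have "t *\<^sub>R ((1/t) *\<^sub>R y + x0) = x" using b True by (simp add: scaleR_add_right)
        finally show ?thesis using b i1 by simp
      next
        case False
        show ?thesis
        proof (cases "t = 0")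
          case True then show ?thesis using b Sdom by auto
        next
          case False
          define s where "s = -t"
          have s: "s > 0" using False \<open>\<not> t > 0\<close> s_def by simp
          have "((1/s) *\<^sub>R y, (1/s) * v) \<in> S" using Ssc b by blast
          then have "(1/s) * v - p ((1/s) *\<^sub>R y - x0) \<le> c" using c1 by blast
          then have "s * ((1/s) * v - p ((1/s) *\<^sub>R y - x0)) \<le> s * c" using s by (intro mult_left_mono) auto
          moreover have "s * ((1/s) * v - p ((1/s) *\<^sub>R y - x0)) = v - s * p ((1/s) *\<^sub>R y - x0)"
            using s by (simp add: right_diff_distrib)
          ultimately have "v - s * p ((1/s) *\<^sub>R y - x0) \<le> s * c" by simp
          moreover have "s * p ((1/s) *\<^sub>R y - x0) = p (s *\<^sub>R ((1/s) *\<^sub>R y - x0))"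
            using psc[of "(1/s) *\<^sub>R y - x0" s] s Eminus Esc yE x0E by simp
          moreover have "s *\<^sub>R ((1/s) *\<^sub>R y - x0) = x" using b s s_def by (simp add: scaleR_diff_right)
          ultimately show ?thesis using b s_def by simp
        qed
      qed
    next
      fix x v y u assume "(x,v)\<in>S'" "(y,u)\<in>S'"
      then obtain y1 v1 t1 y2 v2 t2 where "(y1,v1)\<in>S" "x = y1 + t1 *\<^sub>R x0" "v = v1 + t1*c"
        "(y2,v2)\<in>S" "y = y2 + t2 *\<^sub>R x0" "u = v2 + t2*c" unfolding S'_def by blast
      moreover have "(y1+y2, v1+v2)\<in>S" using Sadd calculation by blast
      moreover have "(x+y, v+u) = ((y1+y2) + (t1+t2) *\<^sub>R x0, (v1+v2) + (t1+t2)*c)"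
        using calculation by (simp add: algebra_simps)
      ultimately show "(x+y, v+u)\<in>S'" unfolding S'_def by blast
    next
      fix a x v assume "(x,v)\<in>S'"
      then obtain y1 v1 t1 where "(y1,v1)\<in>S" "x = y1 + t1 *\<^sub>R x0" "v = v1 + t1*c" using S'_def by auto
      moreover have "(a *\<^sub>R y1, a * v1)\<in>S" using Ssc calculation by blast
      moreover have "(a *\<^sub>R x, a * v) = (a *\<^sub>R y1 + (a*t1) *\<^sub>R x0, a * v1 + (a*t1)*c)"
        using calculation by (simp add: algebra_simps)
      ultimately show "(a *\<^sub>R x, a * v)\<in>S'" unfolding S'_def by blast
    qed
    moreover have "S \<subseteq> S'"
    proof
      fix z assume "z \<in> S"
      obtain a b where ab: "z = (a,b)" by (cases z)
      have "(a + 0 *\<^sub>R x0, b + 0 * c) \<in> S'" unfolding S'_def using \<open>z\<in>S\<close> ab by blast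
      then show "z \<in> S'" using ab by simp
    qed
    moreover have "(x0, c) \<in> S'"
    proof -
      have "(0 + 1 *\<^sub>R x0, 0 + 1 * c) \<in> S'" unfolding S'_def using S00 by blast
      then show ?thesis by simp
    qed
    ultimately have "S' = S" using smax A_def by blast
    then show False using \<open>(x0, c) \<in> S'\<close> x0n by simp
  qed
  define Psi where "Psi x = (THE v. (x,v)\<in>S)" for x
  have PsiS: "x\<in>E \<Longrightarrow> (x, Psi x)\<in>S" for x
    unfolding Psi_def using full Sfun by (metis theI)
  have PsiE: "(x,v)\<in>S \<Longrightarrow> Psi x = v" for x v
    using PsiS[OF SE] Sfun by blast
  show ?thesis
  proof (intro exI[of _ Psi] conjI ballI allI)
    fix x y assume "x\<in>E" "y\<in>E" then show "Psi (x+y) = Psi x + Psi y" using PsiS Sadd PsiE by blast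
  next
    fix c x assume "x\<in>E" then show "Psi (c *\<^sub>R x) = c * Psi x" using PsiS Ssc PsiE by blast
  next
    fix x assume "x\<in>M" then show "Psi x = phi x" using SM PsiE by blast
  next
    fix x assume "x\<in>E" then show "Psi x \<le> p x" using PsiS Sdom by blast
  qed
qed

(* ---- from P.thy ---- *)
instantiation "fun" :: (type, real_vector) real_vector
begin
definition scaleR_fun :: "real \<Rightarrow> ('a \<Rightarrow> 'b) \<Rightarrow> 'a \<Rightarrow> 'b" where
  "scaleR_fun c f = (\<lambda>x. c *\<^sub>R f x)"
instance by standard (auto simp: scaleR_fun_def fun_eq_iff scaleR_add_right scaleR_add_left)
end

lemma hb_param:
  fixes E :: "'v::real_vector set" and Lam :: "'l::real_vector set" and ell :: "'l \<Rightarrow> 'v"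
    and phi :: "'l \<Rightarrow> real" and p :: "'v \<Rightarrow> real"
  assumes E0: "0 \<in> E" and Eadd: "\<And>x y. x\<in>E \<Longrightarrow> y\<in>E \<Longrightarrow> x+y \<in> E"
    and Esc: "\<And>c x. x\<in>E \<Longrightarrow> c *\<^sub>R x \<in> E"
    and L0: "0 \<in> Lam" and Ladd: "\<And>a b. a\<in>Lam \<Longrightarrow> b\<in>Lam \<Longrightarrow> a+b \<in> Lam"
    and Lsc: "\<And>c a. a\<in>Lam \<Longrightarrow> c *\<^sub>R a \<in> Lam"
    and ellE: "\<And>a. a\<in>Lam \<Longrightarrow> ell a \<in> E"
    and elladd: "\<And>a b. a\<in>Lam \<Longrightarrow> b\<in>Lam \<Longrightarrow> ell (a+b) = ell a + ell b"
    and ellsc: "\<And>c a. a\<in>Lam \<Longrightarrow> ell (c *\<^sub>R a) = c *\<^sub>R ell a"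
    and phiadd: "\<And>a b. a\<in>Lam \<Longrightarrow> b\<in>Lam \<Longrightarrow> phi (a+b) = phi a + phi b"
    and phisc: "\<And>c a. a\<in>Lam \<Longrightarrow> phi (c *\<^sub>R a) = c * phi a"
    and dom: "\<And>a. a\<in>Lam \<Longrightarrow> phi a \<le> p (ell a)"
    and padd: "\<And>x y. x\<in>E \<Longrightarrow> y\<in>E \<Longrightarrow> p (x+y) \<le> p x + p y"
    and psc: "\<And>c x. x\<in>E \<Longrightarrow> c \<ge> 0 \<Longrightarrow> p (c *\<^sub>R x) = c * p x"
  shows "\<exists>Psi. (\<forall>x\<in>E. \<forall>y\<in>E. Psi (x+y) = Psi x + Psi y) \<and> (\<forall>c. \<forall>x\<in>E. Psi (c *\<^sub>R x) = c * Psi x)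
     \<and> (\<forall>a\<in>Lam. Psi (ell a) = phi a) \<and> (\<forall>x\<in>E. Psi x \<le> p x)"
proof -
  have p0: "p 0 = 0" using psc[OF E0, of 0] by simp
  have sub: "a - b \<in> Lam \<and> ell (a - b) = ell a - ell b \<and> phi (a - b) = phi a - phi b"
    if a: "a\<in>Lam" and b: "b\<in>Lam" for a b
    using Ladd[OF a Lsc[OF b, of "-1"]] elladd[OF a Lsc[OF b, of "-1"]] ellsc[OF b, of "-1"]
      phiadd[OF a Lsc[OF b, of "-1"]] phisc[OF b, of "-1"] by simp
  have wd: "phi a = phi b" if a: "a\<in>Lam" and b: "b\<in>Lam" and e: "ell a = ell b" for a b
  proof -
    have "phi (a - b) \<le> p (ell (a - b))" using dom sub a b by blast
    moreover have "phi (b - a) \<le> p (ell (b - a))" using dom sub a b by blast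
    ultimately show ?thesis using p0 sub[OF a b] sub[OF b a] e by simp
  qed
  define M where "M = ell ` Lam"
  define phi' where "phi' v = phi (SOME a. a\<in>Lam \<and> ell a = v)" for v
  have phi'ell: "phi' (ell a) = phi a" if a: "a\<in>Lam" for a
  proof -
    have "\<exists>b. b\<in>Lam \<and> ell b = ell a" using a by blast
    then have "(SOME b. b\<in>Lam \<and> ell b = ell a) \<in> Lam \<and> ell (SOME b. b\<in>Lam \<and> ell b = ell a) = ell a"
      by (rule someI_ex)
    then show ?thesis unfolding phi'_def using wd a by blast
  qed
  have ell0: "ell 0 = 0" using ellsc[OF L0, of 0] by simp
  have "\<exists>Psi. (\<forall>x\<in>E. \<forall>y\<in>E. Psi (x+y) = Psi x + Psi y) \<and> (\<forall>c. \<forall>x\<in>E. Psi (c *\<^sub>R x) = c * Psi x)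
     \<and> (\<forall>x\<in>M. Psi x = phi' x) \<and> (\<forall>x\<in>E. Psi x \<le> p x)"
  proof (rule hb_basic[OF E0 Eadd Esc])
    show "0 \<in> M" using L0 ell0 M_def by force
    show "M \<subseteq> E" using ellE M_def by blast
  next
    fix x y assume "x\<in>M" "y\<in>M"
    then obtain a b where ab: "a\<in>Lam" "b\<in>Lam" "x = ell a" "y = ell b" using M_def by blast
    then have "x + y = ell (a+b)" using elladd by simp
    then show "x + y \<in> M \<and> phi' (x + y) = phi' x + phi' y"
      using ab Ladd phi'ell phiadd M_def by simp
  next
    fix c x assume "x\<in>M"
    then obtain a where ab: "a\<in>Lam" "x = ell a" using M_def by blast
    then have "c *\<^sub>R x = ell (c *\<^sub>R a)" using ellsc by simp
    then show "c *\<^sub>R x \<in> M \<and> phi' (c *\<^sub>R x) = c * phi' x"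
      using ab Lsc phi'ell phisc M_def by simp
  next
    fix x assume "x\<in>M"
    then obtain a where ab: "a\<in>Lam" "x = ell a" using M_def by blast
    then show "phi' x \<le> p x" using phi'ell dom by simp
  qed (use padd psc in auto)
  then obtain Psi where "(\<forall>x\<in>E. \<forall>y\<in>E. Psi (x+y) = Psi x + Psi y)" "(\<forall>c. \<forall>x\<in>E. Psi (c *\<^sub>R x) = c * Psi x)"
     "(\<forall>x\<in>M. Psi x = phi' x)" "(\<forall>x\<in>E. Psi x \<le> p x)" by blast
  then show ?thesis using phi'ell M_def by (intro exI[of _ Psi]) auto
qed

(* ---- from S.thy ---- *)
locale sns =
  fixes V :: "'v set" and ad :: "'v \<Rightarrow> 'v \<Rightarrow> 'v" and sc :: "real \<Rightarrow> 'v \<Rightarrow> 'v" and p :: "'v \<Rightarrow> real"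
  assumes ne: "V \<noteq> {}" and ad_cl: "\<And>x y. x\<in>V \<Longrightarrow> y\<in>V \<Longrightarrow> ad x y \<in> V"
    and sc_cl: "\<And>c x. x\<in>V \<Longrightarrow> sc c x \<in> V"
    and p_nn: "\<And>x. x\<in>V \<Longrightarrow> 0 \<le> p x" and p_sc: "\<And>c x. x\<in>V \<Longrightarrow> p (sc c x) = \<bar>c\<bar> * p x"
begin

abbreviation "D \<equiv> sdual V ad sc p"
abbreviation "dn \<equiv> sdnorm V p"
abbreviation "B \<equiv> sbidual V ad sc p"
abbreviation "bn \<equiv> sbdnorm V ad sc p"
abbreviation "cn \<equiv> scanon V ad sc p"

lemma D_add: "f\<in>D \<Longrightarrow> x\<in>V \<Longrightarrow> y\<in>V \<Longrightarrow> f (ad x y) = f x + f y"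
  and D_sc: "f\<in>D \<Longrightarrow> x\<in>V \<Longrightarrow> f (sc c x) = c * f x"
  and D_out: "f\<in>D \<Longrightarrow> x\<notin>V \<Longrightarrow> f x = 0"
  and D_bd: "f\<in>D \<Longrightarrow> \<exists>C. \<forall>x\<in>V. \<bar>f x\<bar> \<le> C * p x"
  unfolding sdual_def by auto

lemma D_intro:
  assumes "\<And>x y. x\<in>V \<Longrightarrow> y\<in>V \<Longrightarrow> f (ad x y) = f x + f y"
    and "\<And>c x. x\<in>V \<Longrightarrow> f (sc c x) = c * f x"
    and "\<And>x. x\<notin>V \<Longrightarrow> f x = 0" and "\<And>x. x\<in>V \<Longrightarrow> \<bar>f x\<bar> \<le> C * p x"
  shows "f \<in> D"
  unfolding sdual_def using assms by blast

lemma ball_ne: "{x\<in>V. p x \<le> 1} \<noteq> {}"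
proof -
  obtain x0 where "x0 \<in> V" using ne by blast
  then have "sc 0 x0 \<in> V" "p (sc 0 x0) = 0" using sc_cl p_sc by auto
  then show ?thesis by force
qed

lemma dn_bdd: assumes "f\<in>D" shows "bdd_above ((\<lambda>x. \<bar>f x\<bar>) ` {x\<in>V. p x \<le> 1})"
proof -
  obtain C where C: "\<forall>x\<in>V. \<bar>f x\<bar> \<le> C * p x" using D_bd[OF assms] by blast
  have "\<bar>f x\<bar> \<le> max C 0" if "x\<in>V" "p x \<le> 1" for x
  proof -
    have "\<bar>f x\<bar> \<le> C * p x" using C that by blast
    also have "\<dots> \<le> max C 0 * p x" using p_nn[OF that(1)] by (intro mult_right_mono) auto
    also have "\<dots> \<le> max C 0" using p_nn[OF that(1)] that(2) by (simp add: mult_left_le)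
    finally show ?thesis .
  qed
  then show ?thesis unfolding bdd_above_def by blast
qed

lemma dn_upper: "f\<in>D \<Longrightarrow> x\<in>V \<Longrightarrow> p x \<le> 1 \<Longrightarrow> \<bar>f x\<bar> \<le> dn f"
  unfolding sdnorm_def by (rule cSUP_upper[OF _ dn_bdd]) auto

lemma dn_nn: assumes f: "f\<in>D" shows "0 \<le> dn f"
proof -
  obtain x where "x\<in>V" "p x \<le> 1" using ball_ne by blast
  then have "\<bar>f x\<bar> \<le> dn f" using dn_upper[OF f] by blast
  then show ?thesis by linarith
qed

lemma dn_least: "(\<And>x. x\<in>V \<Longrightarrow> p x \<le> 1 \<Longrightarrow> \<bar>f x\<bar> \<le> C) \<Longrightarrow> dn f \<le> C"
  unfolding sdnorm_def by (rule cSUP_least[OF ball_ne]) auto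

lemma dn_approx: assumes "f\<in>D" "r < dn f" shows "\<exists>x\<in>V. p x \<le> 1 \<and> r < \<bar>f x\<bar>"
  using assms(2) unfolding sdnorm_def less_cSUP_iff[OF ball_ne dn_bdd[OF assms(1)]] by auto

lemma dn_bound: assumes f: "f\<in>D" and x: "x\<in>V" shows "\<bar>f x\<bar> \<le> dn f * p x"
proof (cases "p x = 0")
  case True
  obtain C where C: "\<forall>x\<in>V. \<bar>f x\<bar> \<le> C * p x" using D_bd[OF f] by blast
  then show ?thesis using True x by force
next
  case False
  then have px: "p x > 0" using p_nn[OF x] by simp
  let ?z = "sc (1 / p x) x"
  have zV: "?z \<in> V" using sc_cl x by blast
  have pz: "p ?z = 1" using p_sc[OF x] px by simp
  have "\<bar>f ?z\<bar> = \<bar>f x\<bar> / p x" using D_sc[OF f x] px by (simp add: abs_mult)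
  then have "\<bar>f x\<bar> / p x \<le> dn f" using dn_upper[OF f zV] pz by simp
  then show ?thesis using px by (simp add: divide_le_eq)
qed

lemma D_zero: "(\<lambda>x. 0) \<in> D"
  by (rule D_intro[where C=0]) auto

lemma D_plus: assumes "f\<in>D" "g\<in>D" shows "(\<lambda>x. f x + g x) \<in> D"
proof (rule D_intro[where C="dn f + dn g"])
  fix x assume x: "x\<in>V"
  have "\<bar>f x + g x\<bar> \<le> \<bar>f x\<bar> + \<bar>g x\<bar>" by (rule abs_triangle_ineq)
  also have "\<dots> \<le> dn f * p x + dn g * p x" using dn_bound assms x by (intro add_mono) auto
  finally show "\<bar>f x + g x\<bar> \<le> (dn f + dn g) * p x" by (simp add: algebra_simps)
next
  fix x y assume "x\<in>V" "y\<in>V"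
  then show "f (ad x y) + g (ad x y) = f x + g x + (f y + g y)"
    using D_add[OF assms(1)] D_add[OF assms(2)] by simp
next
  fix c x assume "x\<in>V"
  then show "f (sc c x) + g (sc c x) = c * (f x + g x)"
    using D_sc[OF assms(1)] D_sc[OF assms(2)] by (simp add: distrib_left)
next
  fix x assume "x\<notin>V" then show "f x + g x = 0" using D_out[OF assms(1)] D_out[OF assms(2)] by simp
qed

lemma D_scale: assumes "f\<in>D" shows "(\<lambda>x. c * f x) \<in> D"
proof (rule D_intro[where C="\<bar>c\<bar> * dn f"])
  fix x assume x: "x\<in>V"
  have "\<bar>c * f x\<bar> = \<bar>c\<bar> * \<bar>f x\<bar>" by (simp add: abs_mult)
  also have "\<dots> \<le> \<bar>c\<bar> * (dn f * p x)" using dn_bound assms x by (intro mult_left_mono) auto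
  finally show "\<bar>c * f x\<bar> \<le> \<bar>c\<bar> * dn f * p x" by (simp add: algebra_simps)
next
  fix x y assume "x\<in>V" "y\<in>V"
  then show "c * f (ad x y) = c * f x + c * f y"
    using D_add[OF assms(1)] by (simp add: distrib_left)
next
  fix d x assume "x\<in>V"
  then show "c * f (sc d x) = d * (c * f x)"
    using D_sc[OF assms(1)] by simp
next
  fix x assume "x\<notin>V" then show "c * f x = 0" using D_out[OF assms(1)] by simp
qed

lemma dn_plus: assumes "f\<in>D" "g\<in>D" shows "dn (\<lambda>x. f x + g x) \<le> dn f + dn g"
proof (rule dn_least)
  fix x assume x: "x\<in>V" "p x \<le> 1"
  have "\<bar>f x + g x\<bar> \<le> \<bar>f x\<bar> + \<bar>g x\<bar>" by (rule abs_triangle_ineq)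
  also have "\<dots> \<le> dn f + dn g" using dn_upper assms x by (intro add_mono) auto
  finally show "\<bar>f x + g x\<bar> \<le> dn f + dn g" .
qed

lemma dn_scale_le: assumes "f\<in>D" shows "dn (\<lambda>x. c * f x) \<le> \<bar>c\<bar> * dn f"
proof (rule dn_least)
  fix x assume x: "x\<in>V" "p x \<le> 1"
  have "\<bar>c * f x\<bar> = \<bar>c\<bar> * \<bar>f x\<bar>" by (simp add: abs_mult)
  also have "\<dots> \<le> \<bar>c\<bar> * dn f" using dn_upper assms x by (intro mult_left_mono) auto
  finally show "\<bar>c * f x\<bar> \<le> \<bar>c\<bar> * dn f" .
qed

lemma dn_scale: assumes f: "f\<in>D" shows "dn (\<lambda>x. c * f x) = \<bar>c\<bar> * dn f"
proof (cases "c = 0")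
  case True
  then show ?thesis using dn_scale_le[OF f, of c] dn_nn[OF D_scale[OF f, of c]] by simp
next
  case False
  have "dn f = dn (\<lambda>x. (1/c) * (c * f x))" using False by simp
  also have "\<dots> \<le> \<bar>1/c\<bar> * dn (\<lambda>x. c * f x)" by (rule dn_scale_le[OF D_scale[OF f]])
  finally have "\<bar>c\<bar> * dn f \<le> dn (\<lambda>x. c * f x)" using False
    by (simp add: field_simps abs_div_pos)
  then show ?thesis using dn_scale_le[OF f, of c] by simp
qed

lemma dn_zero_imp: assumes f: "f\<in>D" and z: "dn f = 0" shows "f = (\<lambda>x. 0)"
proof
  fix x show "f x = 0"
  proof (cases "x\<in>V")
    case True then show ?thesis using dn_bound[OF f True] z by simp
  qed (use D_out f in auto)
qed

text \<open>Bidual.\<close>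

lemma B_add: "\<Phi>\<in>B \<Longrightarrow> f\<in>D \<Longrightarrow> g\<in>D \<Longrightarrow> \<Phi> (\<lambda>x. f x + g x) = \<Phi> f + \<Phi> g"
  and B_sc: "\<Phi>\<in>B \<Longrightarrow> f\<in>D \<Longrightarrow> \<Phi> (\<lambda>x. c * f x) = c * \<Phi> f"
  and B_out: "\<Phi>\<in>B \<Longrightarrow> f\<notin>D \<Longrightarrow> \<Phi> f = 0"
  and B_bd: "\<Phi>\<in>B \<Longrightarrow> \<exists>C. \<forall>f\<in>D. \<bar>\<Phi> f\<bar> \<le> C * dn f"
  unfolding sbidual_def by auto

lemma B_intro:
  assumes "\<And>f g. f\<in>D \<Longrightarrow> g\<in>D \<Longrightarrow> \<Phi> (\<lambda>x. f x + g x) = \<Phi> f + \<Phi> g"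
    and "\<And>c f. f\<in>D \<Longrightarrow> \<Phi> (\<lambda>x. c * f x) = c * \<Phi> f"
    and "\<And>f. f\<notin>D \<Longrightarrow> \<Phi> f = 0" and "\<And>f. f\<in>D \<Longrightarrow> \<bar>\<Phi> f\<bar> \<le> C * dn f"
  shows "\<Phi> \<in> B"
  unfolding sbidual_def using assms by blast

lemma B_zero: "\<Phi>\<in>B \<Longrightarrow> \<Phi> (\<lambda>x. 0) = 0"
  using B_sc[of \<Phi> "\<lambda>x. 0" 0] D_zero by simp

lemma dn_zero: "dn (\<lambda>x. 0) = 0"
  using dn_least[of "\<lambda>x. 0" 0] dn_nn[OF D_zero] by simp

lemma dball_ne: "{f\<in>D. dn f \<le> 1} \<noteq> {}"
  using D_zero dn_zero by force

lemma bn_bdd: assumes "\<Phi>\<in>B" shows "bdd_above ((\<lambda>f. \<bar>\<Phi> f\<bar>) ` {f\<in>D. dn f \<le> 1})"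
proof -
  obtain C where C: "\<forall>f\<in>D. \<bar>\<Phi> f\<bar> \<le> C * dn f" using B_bd[OF assms] by blast
  have "\<bar>\<Phi> f\<bar> \<le> max C 0" if "f\<in>D" "dn f \<le> 1" for f
  proof -
    have "\<bar>\<Phi> f\<bar> \<le> C * dn f" using C that by blast
    also have "\<dots> \<le> max C 0 * dn f" using dn_nn[OF that(1)] by (intro mult_right_mono) auto
    also have "\<dots> \<le> max C 0" using dn_nn[OF that(1)] that(2) by (simp add: mult_left_le)
    finally show ?thesis .
  qed
  then show ?thesis unfolding bdd_above_def by blast
qed

lemma bn_upper: "\<Phi>\<in>B \<Longrightarrow> f\<in>D \<Longrightarrow> dn f \<le> 1 \<Longrightarrow> \<bar>\<Phi> f\<bar> \<le> bn \<Phi>"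
  unfolding sbdnorm_def by (rule cSUP_upper[OF _ bn_bdd]) auto

lemma bn_nn: assumes P: "\<Phi>\<in>B" shows "0 \<le> bn \<Phi>"
proof -
  have "\<bar>\<Phi> (\<lambda>x. 0)\<bar> \<le> bn \<Phi>" using bn_upper[OF P D_zero] dn_zero by simp
  then show ?thesis by linarith
qed

lemma bn_least: "(\<And>f. f\<in>D \<Longrightarrow> dn f \<le> 1 \<Longrightarrow> \<bar>\<Phi> f\<bar> \<le> C) \<Longrightarrow> bn \<Phi> \<le> C"
  unfolding sbdnorm_def by (rule cSUP_least[OF dball_ne]) auto

lemma bn_approx: assumes "\<Phi>\<in>B" "r < bn \<Phi>" shows "\<exists>f\<in>D. dn f \<le> 1 \<and> r < \<bar>\<Phi> f\<bar>"
  using assms(2) unfolding sbdnorm_def less_cSUP_iff[OF dball_ne bn_bdd[OF assms(1)]] by auto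

lemma bn_bound: assumes P: "\<Phi>\<in>B" and f: "f\<in>D" shows "\<bar>\<Phi> f\<bar> \<le> bn \<Phi> * dn f"
proof (cases "dn f = 0")
  case True
  then have "f = (\<lambda>x. 0)" using dn_zero_imp f by blast
  then show ?thesis using B_zero[OF P] True by simp
next
  case False
  then have d: "dn f > 0" using dn_nn[OF f] by simp
  let ?g = "\<lambda>x. (1 / dn f) * f x"
  have gD: "?g \<in> D" using D_scale[OF f] .
  have dg: "dn ?g \<le> 1" using dn_scale[OF f, of "1 / dn f"] d by simp
  have "\<Phi> ?g = (1 / dn f) * \<Phi> f" by (rule B_sc[OF P f])
  then have "\<bar>\<Phi> ?g\<bar> = \<bar>\<Phi> f\<bar> / dn f" using d by (simp add: abs_mult)
  then have "\<bar>\<Phi> f\<bar> / dn f \<le> bn \<Phi>" using bn_upper[OF P gD dg] by simp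
  then show ?thesis using d by (simp add: divide_le_eq)
qed

lemma B_diff: assumes P: "\<Phi>\<in>B" and Q: "\<Psi>\<in>B" shows "(\<lambda>f. \<Phi> f - \<Psi> f) \<in> B"
proof (rule B_intro[where C="bn \<Phi> + bn \<Psi>"])
  fix f assume f: "f\<in>D"
  have "\<bar>\<Phi> f - \<Psi> f\<bar> \<le> \<bar>\<Phi> f\<bar> + \<bar>\<Psi> f\<bar>" by (rule abs_triangle_ineq4)
  also have "\<dots> \<le> bn \<Phi> * dn f + bn \<Psi> * dn f" using bn_bound P Q f by (intro add_mono) auto
  finally show "\<bar>\<Phi> f - \<Psi> f\<bar> \<le> (bn \<Phi> + bn \<Psi>) * dn f" by (simp add: algebra_simps)
next
  fix f g assume "f\<in>D" "g\<in>D"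
  then show "\<Phi> (\<lambda>x. f x + g x) - \<Psi> (\<lambda>x. f x + g x) = \<Phi> f - \<Psi> f + (\<Phi> g - \<Psi> g)"
    using B_add[OF P] B_add[OF Q] by simp
next
  fix c f assume "f\<in>D"
  then show "\<Phi> (\<lambda>x. c * f x) - \<Psi> (\<lambda>x. c * f x) = c * (\<Phi> f - \<Psi> f)"
    using B_sc[OF P] B_sc[OF Q] by (simp add: right_diff_distrib)
next
  fix f assume "f\<notin>D" then show "\<Phi> f - \<Psi> f = 0" using B_out[OF P] B_out[OF Q] by simp
qed

lemma B_scale: assumes P: "\<Phi>\<in>B" shows "(\<lambda>f. c * \<Phi> f) \<in> B"
proof (rule B_intro[where C="\<bar>c\<bar> * bn \<Phi>"])
  fix f assume f: "f\<in>D"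
  have "\<bar>c * \<Phi> f\<bar> = \<bar>c\<bar> * \<bar>\<Phi> f\<bar>" by (simp add: abs_mult)
  also have "\<dots> \<le> \<bar>c\<bar> * (bn \<Phi> * dn f)" using bn_bound P f by (intro mult_left_mono) auto
  finally show "\<bar>c * \<Phi> f\<bar> \<le> \<bar>c\<bar> * bn \<Phi> * dn f" by (simp add: algebra_simps)
next
  fix f g assume "f\<in>D" "g\<in>D"
  then show "c * \<Phi> (\<lambda>x. f x + g x) = c * \<Phi> f + c * \<Phi> g"
    using B_add[OF P] by (simp add: distrib_left)
next
  fix d f assume "f\<in>D"
  then show "c * \<Phi> (\<lambda>x. d * f x) = d * (c * \<Phi> f)"
    using B_sc[OF P] by simp
next
  fix f assume "f\<notin>D" then show "c * \<Phi> f = 0" using B_out[OF P] by simp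
qed

lemma cn_apply: "f\<in>D \<Longrightarrow> cn x f = f x"
  unfolding scanon_def by simp

lemma cn_B: assumes x: "x\<in>V" shows "cn x \<in> B"
proof (rule B_intro[where C="p x"])
  fix f assume f: "f\<in>D"
  have "\<bar>f x\<bar> \<le> dn f * p x" using dn_bound[OF f x] .
  then show "\<bar>cn x f\<bar> \<le> p x * dn f" using cn_apply[OF f] by (simp only: mult.commute)
next
  fix f g assume f: "f\<in>D" and g: "g\<in>D"
  show "cn x (\<lambda>y. f y + g y) = cn x f + cn x g"
    using cn_apply[OF D_plus[OF f g]] cn_apply[OF f] cn_apply[OF g] by simp
next
  fix c f assume f: "f\<in>D"
  show "cn x (\<lambda>y. c * f y) = c * cn x f"
    using cn_apply[OF D_scale[OF f]] cn_apply[OF f] by simp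
next
  fix f assume "f\<notin>D" then show "cn x f = 0" by (simp add: scanon_def)
qed

end

(* ---- from O.thy ---- *)
locale sop = S1: sns V ad sc p + S2: sns W ad' sc' q
  for V :: "'v set" and ad sc p and W :: "'w set" and ad' sc' q +
  fixes T :: "'v \<Rightarrow> 'w" and K :: real
  assumes T_cl: "\<And>x. x\<in>V \<Longrightarrow> T x \<in> W"
    and T_ad: "\<And>x y. x\<in>V \<Longrightarrow> y\<in>V \<Longrightarrow> T (ad x y) = ad' (T x) (T y)"
    and T_sc: "\<And>c x. x\<in>V \<Longrightarrow> T (sc c x) = sc' c (T x)"
    and T_bd: "\<And>x. x\<in>V \<Longrightarrow> q (T x) \<le> K * p x" and K_nn: "0 \<le> K"
begin

abbreviation "tc g \<equiv> (\<lambda>x. if x\<in>V then g (T x) else 0)"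
abbreviation "biadj \<equiv> sbiadj V ad sc p W ad' sc' q T"

lemma tc_bound: assumes g: "g\<in>S2.D" and x: "x\<in>V" shows "\<bar>tc g x\<bar> \<le> (S2.dn g * K) * p x"
proof -
  have "\<bar>g (T x)\<bar> \<le> S2.dn g * q (T x)" using S2.dn_bound[OF g T_cl[OF x]] .
  also have "\<dots> \<le> S2.dn g * (K * p x)" using T_bd[OF x] S2.dn_nn[OF g] by (intro mult_left_mono)
  finally show ?thesis using x by (simp add: mult.assoc)
qed

lemma tc_D: assumes g: "g\<in>S2.D" shows "tc g \<in> S1.D"
proof (rule S1.D_intro[where C="S2.dn g * K"])
  fix x y assume "x\<in>V" "y\<in>V"
  then show "tc g (ad x y) = tc g x + tc g y"
    using S1.ad_cl T_ad S2.D_add[OF g] T_cl by simp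
next
  fix c x assume "x\<in>V"
  then show "tc g (sc c x) = c * tc g x"
    using S1.sc_cl T_sc S2.D_sc[OF g] T_cl by simp
qed (use tc_bound g in auto)

lemma tc_dn: assumes g: "g\<in>S2.D" shows "S1.dn (tc g) \<le> S2.dn g * K"
proof (rule S1.dn_least)
  fix x assume x: "x\<in>V" "p x \<le> 1"
  have "\<bar>tc g x\<bar> \<le> (S2.dn g * K) * p x" using tc_bound[OF g x(1)] .
  also have "\<dots> \<le> S2.dn g * K" using x S2.dn_nn[OF g] K_nn S1.p_nn[OF x(1)]
    by (simp add: mult_left_le)
  finally show "\<bar>tc g x\<bar> \<le> S2.dn g * K" .
qed

lemma biadj_apply: "g\<in>S2.D \<Longrightarrow> biadj \<Phi> g = \<Phi> (tc g)"
  unfolding sbiadj_def by simp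

lemma biadj_out: "g\<notin>S2.D \<Longrightarrow> biadj \<Phi> g = 0"
  unfolding sbiadj_def by simp

lemma tc_plus: "tc (\<lambda>y. f y + g y) = (\<lambda>x. tc f x + tc (g :: 'w \<Rightarrow> real) x)"
  by (rule ext) simp

lemma tc_scale: "tc (\<lambda>y. c * f y) = (\<lambda>x. c * tc (f :: 'w \<Rightarrow> real) x)"
  by (rule ext) simp

lemma biadj_B: assumes P: "\<Phi>\<in>S1.B" shows "biadj \<Phi> \<in> S2.B"
proof (rule S2.B_intro[where C="S1.bn \<Phi> * K"])
  fix f g assume f: "f\<in>S2.D" and g: "g\<in>S2.D"
  show "biadj \<Phi> (\<lambda>x. f x + g x) = biadj \<Phi> f + biadj \<Phi> g"
    using biadj_apply S2.D_plus[OF f g] f g tc_plus S1.B_add[OF P tc_D[OF f] tc_D[OF g]] by simp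
next
  fix c f assume f: "f\<in>S2.D"
  show "biadj \<Phi> (\<lambda>x. c * f x) = c * biadj \<Phi> f"
    using biadj_apply S2.D_scale[OF f] f tc_scale S1.B_sc[OF P tc_D[OF f]] by simp
next
  fix f assume "f\<notin>S2.D" then show "biadj \<Phi> f = 0" by (rule biadj_out)
next
  fix f assume f: "f\<in>S2.D"
  have "\<bar>biadj \<Phi> f\<bar> = \<bar>\<Phi> (tc f)\<bar>" using biadj_apply[OF f] by simp
  also have "\<dots> \<le> S1.bn \<Phi> * S1.dn (tc f)" by (rule S1.bn_bound[OF P tc_D[OF f]])
  also have "\<dots> \<le> S1.bn \<Phi> * (S2.dn f * K)" using tc_dn[OF f] S1.bn_nn[OF P] by (rule mult_left_mono)
  finally show "\<bar>biadj \<Phi> f\<bar> \<le> S1.bn \<Phi> * K * S2.dn f" by (simp add: algebra_simps)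
qed

end

lemma sns_normed: "sns (UNIV :: 'a::real_normed_vector set) (+) (*\<^sub>R) norm"
  by unfold_locales auto

lemma sop_normed:
  fixes T :: "'a::real_normed_vector \<Rightarrow> 'b::real_normed_vector"
  assumes "bounded_linear T"
  shows "\<exists>K. sop (UNIV :: 'a set) (+) (*\<^sub>R) norm (UNIV :: 'b set) (+) (*\<^sub>R) norm T K"
proof -
  obtain K where K: "K > 0" "\<And>x. norm (T x) \<le> norm x * K"
    using bounded_linear.pos_bounded[OF assms] by blast
  have "sop (UNIV :: 'a set) (+) (*\<^sub>R) norm (UNIV :: 'b set) (+) (*\<^sub>R) norm T K"
    unfolding sop_def sop_axioms_def
    using sns_normed[where 'a='a] sns_normed[where 'a='b] K linear_add[OF bounded_linear.linear[OF assms]] linear_scale[OF bounded_linear.linear[OF assms]]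
    by (auto simp: mult.commute)
  then show ?thesis by blast
qed

section \<open>Ultrafilters\<close>

lemma uf_le_seq: assumes U: "free_ultrafilter_nat U" shows "U \<le> sequentially"
proof (rule filter_leI)
  fix P assume "eventually P sequentially"
  then obtain N where N: "\<And>n. n \<ge> N \<Longrightarrow> P n" by (auto simp: eventually_sequentially)
  have "eventually (\<lambda>j. j \<noteq> n) U" for n
  proof -
    have "eventually (\<lambda>j. j \<in> {n}) U \<or> eventually (\<lambda>j. j \<notin> {n}) U" using U unfolding free_ultrafilter_nat_def by blast
    moreover have "\<not> eventually (\<lambda>j. j = n) U" using U unfolding free_ultrafilter_nat_def by blast
    ultimately show ?thesis by simp
  qed
  then have "eventually (\<lambda>j. \<forall>n\<in>{..<N}. j \<noteq> n) U" by (intro eventually_ball_finite) auto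
  then show "eventually P U" by (rule eventually_mono) (use N in \<open>auto simp: not_less[symmetric]\<close>)
qed

lemma uf_conv: fixes s :: "nat \<Rightarrow> real" assumes U: "free_ultrafilter_nat U" and M: "\<And>j. \<bar>s j\<bar> \<le> M"
  shows "\<exists>L. (s \<longlongrightarrow> L) U"
proof -
  have Unb: "U \<noteq> bot" using U unfolding free_ultrafilter_nat_def by blast
  define A where "A = {r. eventually (\<lambda>j. r \<le> s j) U}"
  have "-M \<le> s j" for j using M[of j] by linarith
  then have Ane: "-M \<in> A" unfolding A_def by (auto intro!: always_eventually)
  have Abd: "r \<le> M" if "r \<in> A" for r
  proof -
    have "eventually (\<lambda>j. r \<le> s j) U" using that A_def by blast
    then obtain j where "r \<le> s j" using eventually_happens'[OF Unb] by blast
    then show ?thesis using M[of j] by (simp add: abs_le_iff)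
  qed
  have bdd: "bdd_above A" using Abd unfolding bdd_above_def by blast
  define L where "L = Sup A"
  have "(s \<longlongrightarrow> L) U"
  proof (rule order_tendstoI)
    fix a assume "a < L"
    then obtain r where "r \<in> A" "a < r" using less_cSup_iff[OF _ bdd] Ane L_def by blast
    then show "eventually (\<lambda>j. a < s j) U" unfolding A_def by (auto elim: eventually_mono)
  next
    fix b assume b: "L < b"
    have "eventually (\<lambda>j. j \<in> {j. s j < b}) U \<or> eventually (\<lambda>j. j \<notin> {j. s j < b}) U"
      using U unfolding free_ultrafilter_nat_def by blast
    moreover have "\<not> eventually (\<lambda>j. j \<notin> {j. s j < b}) U"
    proof
      assume "eventually (\<lambda>j. j \<notin> {j. s j < b}) U"
      then have "b \<in> A" unfolding A_def by (auto elim: eventually_mono)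
      then have "b \<le> L" unfolding L_def using cSup_upper[OF _ bdd] by blast
      then show False using b by simp
    qed
    ultimately show "eventually (\<lambda>j. s j < b) U" by simp
  qed
  then show ?thesis by blast
qed

lemma uf_Lim: assumes U: "free_ultrafilter_nat U" and "(s \<longlongrightarrow> L) U" shows "Lim U s = L"
  using assms tendsto_Lim unfolding free_ultrafilter_nat_def by blast

lemma uf_Lim_conv: fixes s :: "nat \<Rightarrow> real" assumes U: "free_ultrafilter_nat U" and M: "\<And>j. \<bar>s j\<bar> \<le> M"
  shows "(s \<longlongrightarrow> Lim U s) U"
proof -
  obtain L where L: "(s \<longlongrightarrow> L) U" using uf_conv[of U s M] U M by blast
  then show ?thesis using uf_Lim[OF U L] by simp
qed

lemma uf_nb: "free_ultrafilter_nat U \<Longrightarrow> U \<noteq> bot"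
  unfolding free_ultrafilter_nat_def by blast

(* ---- from UP.thy ---- *)
lemma linf_iff: "x \<in> linf \<longleftrightarrow> (\<exists>M. \<forall>j. norm (x j) \<le> M)"
  unfolding linf_def bounded_iff by auto

context
  fixes U :: "nat filter"
  assumes U: "free_ultrafilter_nat U"
begin

lemma unorm_conv: assumes "x \<in> linf" shows "((\<lambda>j. norm (x j)) \<longlongrightarrow> unorm U x) U"
proof -
  obtain M where M: "\<And>j. norm (x j) \<le> M" using assms linf_iff by blast
  show ?thesis unfolding unorm_def by (rule uf_Lim_conv[OF U, of _ M]) (use M in auto)
qed

lemma unorm_nn: assumes "x \<in> linf" shows "0 \<le> unorm U x"
  by (rule tendsto_lowerbound[OF unorm_conv[OF assms]]) (auto simp: uf_nb[OF U])

lemma unorm_le: assumes x: "x \<in> linf" and y: "y \<in> linf" and le: "\<And>j. norm (y j) \<le> K * norm (x j)"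
  shows "unorm U y \<le> K * unorm U x"
proof (rule tendsto_le[OF uf_nb[OF U]])
  show "((\<lambda>j. K * norm (x j)) \<longlongrightarrow> K * unorm U x) U" by (intro tendsto_mult_left unorm_conv x)
  show "((\<lambda>j. norm (y j)) \<longlongrightarrow> unorm U y) U" by (rule unorm_conv[OF y])
qed (use le in auto)

lemma unorm_bound: assumes x: "x \<in> linf" and le: "\<And>j. norm (x j) \<le> M" shows "unorm U x \<le> M"
  by (rule tendsto_le[OF uf_nb[OF U] tendsto_const unorm_conv[OF x]]) (use le in auto)

lemma unorm_zero: assumes x: "x \<in> linf" and le: "\<And>j. norm (x j) \<le> C / (real j + 1)" shows "unorm U x = 0"
proof -
  have "((\<lambda>j. C * inverse (real (Suc j))) \<longlongrightarrow> 0) sequentially"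
    by (intro tendsto_mult_right_zero LIMSEQ_inverse_real_of_nat)
  then have "((\<lambda>j. C / (real j + 1)) \<longlongrightarrow> 0) sequentially"
    by (simp add: divide_inverse add.commute)
  then have "((\<lambda>j. C / (real j + 1)) \<longlongrightarrow> 0) U" using uf_le_seq[OF U] tendsto_mono by blast
  then have "unorm U x \<le> 0" by (rule tendsto_le[OF uf_nb[OF U] _ unorm_conv[OF x]]) (use le in auto)
  then show ?thesis using unorm_nn[OF x] by simp
qed

lemma linf_add: "x \<in> linf \<Longrightarrow> y \<in> linf \<Longrightarrow> seq_add x y \<in> linf"
proof -
  assume "x \<in> linf" "y \<in> linf"
  then obtain M N where "\<And>j. norm (x j) \<le> M" "\<And>j. norm (y j) \<le> N" using linf_iff by metis
  then have "norm (seq_add x y j) \<le> M + N" for j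
    unfolding seq_add_def by (metis add_mono norm_triangle_ineq order_trans)
  then show ?thesis using linf_iff by blast
qed

lemma linf_scale: "x \<in> linf \<Longrightarrow> seq_scale c x \<in> linf"
proof -
  assume "x \<in> linf"
  then obtain M where M: "\<And>j. norm (x j) \<le> M" using linf_iff by metis
  have "norm (seq_scale c x j) \<le> \<bar>c\<bar> * M" for j
    unfolding seq_scale_def using M[of j] by (simp add: mult_left_mono)
  then show ?thesis using linf_iff by blast
qed

lemma unorm_scale: assumes x: "x \<in> linf" shows "unorm U (seq_scale c x) = \<bar>c\<bar> * unorm U x"
proof -
  have "((\<lambda>j. norm (seq_scale c x j)) \<longlongrightarrow> \<bar>c\<bar> * unorm U x) U"
    unfolding seq_scale_def by (simp add: tendsto_mult_left unorm_conv[OF x])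
  moreover have "((\<lambda>j. norm (seq_scale c x j)) \<longlongrightarrow> unorm U (seq_scale c x)) U"
    by (rule unorm_conv[OF linf_scale[OF x]])
  ultimately show ?thesis using tendsto_unique[OF uf_nb[OF U]] by blast
qed

lemma sns_linf: "sns (linf :: (nat \<Rightarrow> 'a::real_normed_vector) set) seq_add seq_scale (unorm U)"
proof
  show "(linf :: (nat \<Rightarrow> 'a) set) \<noteq> {}" using linf_iff[of "\<lambda>j. 0::'a"] by auto
qed (auto simp: linf_add linf_scale unorm_nn unorm_scale)

lemma sop_linf:
  fixes T :: "'a::real_normed_vector \<Rightarrow> 'b::real_normed_vector"
  assumes T: "bounded_linear T" and K: "K \<ge> 0" "\<And>x. norm (T x) \<le> K * norm x"
  shows "sop (linf :: (nat \<Rightarrow> 'a) set) seq_add seq_scale (unorm U) (linf :: (nat \<Rightarrow> 'b) set) seq_add seq_scale (unorm U)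
    (\<lambda>x j. T (x j)) K"
proof -
  have lin: "linear T" using T bounded_linear.linear by blast
  have Tl: "(\<lambda>j. T (x j)) \<in> linf" if xl: "x \<in> linf" for x
  proof -
    obtain M where M: "\<And>j. norm (x j) \<le> M" using xl linf_iff by metis
    have "norm (T (x j)) \<le> K * M" for j using K(2)[of "x j"] M[of j] K(1) by (meson mult_left_mono order_trans)
    then show ?thesis using linf_iff by blast
  qed
  show ?thesis
    unfolding sop_def sop_axioms_def
  proof (intro conjI allI impI)
    show "sns (linf :: (nat \<Rightarrow> 'a) set) seq_add seq_scale (unorm U)" by (rule sns_linf)
    show "sns (linf :: (nat \<Rightarrow> 'b) set) seq_add seq_scale (unorm U)" by (rule sns_linf)
  next
    fix x :: "nat \<Rightarrow> 'a" assume "x \<in> linf" then show "(\<lambda>j. T (x j)) \<in> linf" by (rule Tl)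
  next
    fix x y :: "nat \<Rightarrow> 'a" show "(\<lambda>j. T (seq_add x y j)) = seq_add (\<lambda>j. T (x j)) (\<lambda>j. T (y j))"
      unfolding seq_add_def using linear_add[OF lin] by simp
  next
    fix c and x :: "nat \<Rightarrow> 'a" show "(\<lambda>j. T (seq_scale c x j)) = seq_scale c (\<lambda>j. T (x j))"
      unfolding seq_scale_def using linear_scale[OF lin] by simp
  next
    fix x :: "nat \<Rightarrow> 'a" assume x: "x \<in> linf"
    show "unorm U (\<lambda>j. T (x j)) \<le> K * unorm U x"
      by (rule unorm_le[OF x Tl[OF x]]) (use K in auto)
  qed (use K in auto)
qed

end

(* ---- from G.thy ---- *)
context
  fixes T :: "'a::real_normed_vector \<Rightarrow> 'b::real_normed_vector" and K :: real
  assumes sopT: "sop (UNIV::'a set) (+) (*\<^sub>R) norm (UNIV::'b set) (+) (*\<^sub>R) norm T K"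
begin

interpretation XY: sop "UNIV::'a set" "(+)" "(*\<^sub>R)" norm "UNIV::'b set" "(+)" "(*\<^sub>R)" norm T K
  by (rule sopT)

lemma Tlin: "T (x + y) = T x + T y" "T (c *\<^sub>R x) = c *\<^sub>R T x" "T 0 = 0"
  using XY.T_ad XY.T_sc[of 0 0] XY.T_sc by auto

lemma Dlin1: assumes "g \<in> XY.S1.D" shows "g (x + y) = g x + g y" "g (c *\<^sub>R x) = c * g x" "g 0 = 0"
  using XY.S1.D_add[OF assms] XY.S1.D_sc[OF assms] XY.S1.D_sc[OF assms, of 0 0] by auto

lemma Dlin2: assumes "g \<in> XY.S2.D" shows "g (x + y) = g x + g y" "g (c *\<^sub>R x) = c * g x" "g 0 = 0"
  using XY.S2.D_add[OF assms] XY.S2.D_sc[OF assms] XY.S2.D_sc[OF assms, of 0 0] by auto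

lemma max3_scale: "c \<ge> 0 \<Longrightarrow> max (c * A) (max (c * B) (c * C)) = c * max A (max B (C::real))"
  by (simp add: max_mult_distrib_left)

lemma dual:
  assumes P: "\<Phi> \<in> XY.S1.B" and Pa: "\<And>f. f\<in>XY.S1.D \<Longrightarrow> \<bar>\<Phi> f\<bar> \<le> a * XY.S1.dn f"
    and Pb: "\<And>h. h\<in>XY.S2.D \<Longrightarrow> \<bar>XY.biadj \<Phi> h - h w\<bar> \<le> b * XY.S2.dn h"
    and a: "a > 0" and b: "b > 0" and g: "g \<in> XY.S1.D"
    and H: "\<And>x t. norm x \<le> a \<Longrightarrow> norm (T x - t *\<^sub>R w) \<le> b \<Longrightarrow> \<bar>t\<bar> \<le> 1 \<Longrightarrow> g x + \<mu> * t \<le> S"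
  shows "\<Phi> g + \<mu> \<le> S"
proof -
  note glin = Dlin1[OF g]
  have S0: "0 \<le> S" using H[of 0 0] Tlin glin a b by simp
  define Nf where "Nf z = max (norm (fst z) / a) (max (norm (fst (snd z)) / b) \<bar>snd (snd z)\<bar>)"
    for z :: "'a \<times> 'b \<times> real"
  define ell where "ell z = (fst z, T (fst z) - snd z *\<^sub>R w, snd z)" for z :: "'a \<times> real"
  define phi where "phi z = g (fst z) + \<mu> * snd z" for z :: "'a \<times> real"
  define pp where "pp z = S * Nf z" for z
  have Nf_nn: "0 \<le> Nf z" for z unfolding Nf_def by (simp add: le_max_iff_disj)
  have claim: "phi z \<le> pp (ell z)" for z
  proof -
    obtain x t where z: "z = (x,t)" by (cases z)
    define n where "n = Nf (ell z)"
    have n_def': "n = max (norm x / a) (max (norm (T x - t *\<^sub>R w) / b) \<bar>t\<bar>)"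
      by (simp add: n_def Nf_def ell_def z)
    have n1: "norm x / a \<le> n" and n2: "norm (T x - t *\<^sub>R w) / b \<le> n" and n3: "\<bar>t\<bar> \<le> n"
      unfolding n_def' by auto
    show ?thesis
    proof (cases "n = 0")
      case True
      then have "norm x \<le> 0" "\<bar>t\<bar> \<le> 0" using n1 n3 a by (auto simp: divide_le_0_iff)
      then have "x = 0" "t = 0" by auto
      then show ?thesis using S0 Nf_nn by (simp add: phi_def pp_def z glin)
    next
      case False
      then have npos: "n > 0" using n3 by linarith
      have c1: "norm ((1/n) *\<^sub>R x) \<le> a"
        using n1 npos a by (simp add: divide_le_eq mult.commute)
      have "T ((1/n) *\<^sub>R x) - (t/n) *\<^sub>R w = (1/n) *\<^sub>R (T x - t *\<^sub>R w)"
        using Tlin by (simp add: scaleR_diff_right)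
      then have c2: "norm (T ((1/n) *\<^sub>R x) - (t/n) *\<^sub>R w) \<le> b"
        using n2 npos b by (simp add: divide_le_eq mult.commute)
      have c3: "\<bar>t/n\<bar> \<le> 1" using n3 npos by simp
      have "g ((1/n) *\<^sub>R x) + \<mu> * (t/n) \<le> S" by (rule H[OF c1 c2 c3])
      then have "(g x + \<mu> * t) / n \<le> S" using glin by (simp add: add_divide_distrib)
      then have "g x + \<mu> * t \<le> S * n" using npos by (simp add: divide_le_eq)
      then show ?thesis by (simp add: phi_def pp_def n_def z)
    qed
  qed
  have Nf_add: "Nf (z1 + z2) \<le> Nf z1 + Nf z2" for z1 z2
  proof -
    obtain u1 v1 s1 u2 v2 s2 where z: "z1 = (u1,v1,s1)" "z2 = (u2,v2,s2)" by (cases z1, cases z2) auto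
    have A: "norm (u1 + u2) / a \<le> norm u1 / a + norm u2 / a"
      using divide_right_mono[OF norm_triangle_ineq[of u1 u2], of a] a by (simp add: add_divide_distrib)
    have B: "norm (v1 + v2) / b \<le> norm v1 / b + norm v2 / b"
      using divide_right_mono[OF norm_triangle_ineq[of v1 v2], of b] b by (simp add: add_divide_distrib)
    have C: "\<bar>s1 + s2\<bar> \<le> \<bar>s1\<bar> + \<bar>s2\<bar>" by (rule abs_triangle_ineq)
    have n1: "norm u1 / a \<le> Nf z1" "norm v1 / b \<le> Nf z1" "\<bar>s1\<bar> \<le> Nf z1" unfolding Nf_def z by auto
    have n2: "norm u2 / a \<le> Nf z2" "norm v2 / b \<le> Nf z2" "\<bar>s2\<bar> \<le> Nf z2" unfolding Nf_def z by auto
    have e: "Nf (z1 + z2) = max (norm (u1+u2)/a) (max (norm (v1+v2)/b) \<bar>s1+s2\<bar>)" unfolding Nf_def z by simp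
    show ?thesis unfolding e max.bounded_iff using A B C n1 n2 by (intro conjI; linarith)
  qed
  have Nf_sc: "Nf (c *\<^sub>R z) = c * Nf z" if c: "c \<ge> 0" for c z
  proof -
    obtain u v s where z: "z = (u,v,s)" by (cases z) auto
    have "Nf (c *\<^sub>R z) = max (c * (norm u / a)) (max (c * (norm v / b)) (c * \<bar>s\<bar>))"
      unfolding Nf_def z using c by (simp add: abs_mult)
    also have "\<dots> = c * Nf z" unfolding Nf_def z fst_conv snd_conv by (rule max3_scale[OF c])
    finally show ?thesis .
  qed
  have "\<exists>F. (\<forall>x\<in>UNIV. \<forall>y\<in>UNIV. F (x+y) = F x + F y) \<and> (\<forall>c. \<forall>x\<in>UNIV. F (c *\<^sub>R x) = c * F x)
     \<and> (\<forall>z\<in>UNIV. F (ell z) = phi z) \<and> (\<forall>x\<in>UNIV. F x \<le> pp x)"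
  proof (rule hb_param)
    show "\<And>z1 z2. z1 \<in> UNIV \<Longrightarrow> z2 \<in> UNIV \<Longrightarrow> ell (z1 + z2) = ell z1 + ell z2"
      unfolding ell_def using Tlin by (auto simp: algebra_simps)
    show "\<And>c z. z \<in> UNIV \<Longrightarrow> ell (c *\<^sub>R z) = c *\<^sub>R ell z"
      unfolding ell_def using Tlin by (auto simp: algebra_simps)
    show "\<And>z1 z2. z1 \<in> UNIV \<Longrightarrow> z2 \<in> UNIV \<Longrightarrow> phi (z1 + z2) = phi z1 + phi z2"
      unfolding phi_def using glin by (auto simp: algebra_simps)
    show "\<And>c z. z \<in> UNIV \<Longrightarrow> phi (c *\<^sub>R z) = c * phi z"
      unfolding phi_def using glin by (auto simp: algebra_simps)
    show "\<And>z. z \<in> UNIV \<Longrightarrow> phi z \<le> pp (ell z)" using claim by blast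
    show "\<And>x y. x \<in> UNIV \<Longrightarrow> y \<in> UNIV \<Longrightarrow> pp (x + y) \<le> pp x + pp y"
      unfolding pp_def using Nf_add S0 by (simp add: distrib_left[symmetric] mult_left_mono)
    show "\<And>c x. x \<in> UNIV \<Longrightarrow> 0 \<le> c \<Longrightarrow> pp (c *\<^sub>R x) = c * pp x"
      unfolding pp_def using Nf_sc by simp
  qed auto
  then obtain F where Fadd: "\<And>x y. F (x+y) = F x + F y" and Fsc: "\<And>c x. F (c *\<^sub>R x) = c * F x"
    and Fell: "\<And>z. F (ell z) = phi z" and Fp: "\<And>x. F x \<le> pp x" by blast
  define g1 where "g1 u = F (u, 0, 0)" for u :: 'a
  define h where "h v = F (0, v, 0)" for v :: 'b
  define \<nu> where "\<nu> = F (0, 0, 1)"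
  have Fdec: "F (u, v, s) = g1 u + h v + s * \<nu>" for u v s
  proof -
    have "F (u, v, s) = F ((u, 0, 0) + ((0, v, 0) + s *\<^sub>R (0, 0, 1)))" by simp
    also have "\<dots> = F (u, 0, 0) + (F (0, v, 0) + F (s *\<^sub>R (0, 0, 1)))" by (simp only: Fadd)
    also have "\<dots> = F (u, 0, 0) + (F (0, v, 0) + s * F (0, 0, 1))" by (simp only: Fsc)
    finally show ?thesis unfolding g1_def h_def \<nu>_def by simp
  qed
  have pp1: "pp (u, 0, 0) = S / a * norm u" for u
  proof -
    have nn: "0 \<le> norm u / a" using a by simp
    have "Nf (u,0,0) = norm u / a" unfolding Nf_def using nn by (simp add: max.absorb1)
    then show ?thesis unfolding pp_def by simp
  qed
  have pp2: "pp (0, v, 0) = S / b * norm v" for v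
  proof -
    have nn: "0 \<le> norm v / b" using b by simp
    have "Nf (0,v,0) = norm v / b" unfolding Nf_def using nn by (simp add: max.absorb1 max.absorb2)
    then show ?thesis unfolding pp_def by simp
  qed
  have g1D: "g1 \<in> XY.S1.D"
  proof (rule XY.S1.D_intro[where C="S / a"])
    fix x :: 'a
    have "g1 x \<le> S / a * norm x" using Fp[of "(x,0,0)"] pp1 g1_def by simp
    moreover have "- g1 x \<le> S / a * norm x"
    proof -
      have "g1 (-x) = - g1 x" unfolding g1_def using Fsc[of "-1" "(x,0,0)"] by simp
      then show ?thesis using Fp[of "(-x,0,0)"] pp1[of "-x"] g1_def by simp
    qed
    ultimately show "\<bar>g1 x\<bar> \<le> S / a * norm x" by simp
  next
    fix x y :: 'a show "g1 (x+y) = g1 x + g1 y" using Fadd[of "(x,0,0)" "(y,0,0)"] by (simp add: g1_def)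
  next
    fix c and x :: 'a show "g1 (c *\<^sub>R x) = c * g1 x" using Fsc[of c "(x,0,0)"] by (simp add: g1_def)
  qed simp
  have hD: "h \<in> XY.S2.D"
  proof (rule XY.S2.D_intro[where C="S / b"])
    fix x :: 'b
    have "h x \<le> S / b * norm x" using Fp[of "(0,x,0)"] pp2 h_def by simp
    moreover have "- h x \<le> S / b * norm x"
    proof -
      have "h (-x) = - h x" unfolding h_def using Fsc[of "-1" "(0,x,0)"] by simp
      then show ?thesis using Fp[of "(0,-x,0)"] pp2[of "-x"] h_def by simp
    qed
    ultimately show "\<bar>h x\<bar> \<le> S / b * norm x" by simp
  next
    fix x y :: 'b show "h (x+y) = h x + h y" using Fadd[of "(0,x,0)" "(0,y,0)"] by (simp add: h_def)
  next
    fix c and x :: 'b show "h (c *\<^sub>R x) = c * h x" using Fsc[of c "(0,x,0)"] by (simp add: h_def)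
  qed simp
  have inner: "a * \<bar>g1 u\<bar> + b * \<bar>h v\<bar> + \<bar>\<nu>\<bar> \<le> S" if u: "norm u \<le> 1" and v: "norm v \<le> 1" for u v
  proof -
    define u' where "u' = (a * sgn (g1 u)) *\<^sub>R u"
    define v' where "v' = (b * sgn (h v)) *\<^sub>R v"
    have e: "F (u', v', sgn \<nu>) = a * \<bar>g1 u\<bar> + b * \<bar>h v\<bar> + \<bar>\<nu>\<bar>"
      unfolding Fdec u'_def v'_def using Dlin1[OF g1D] Dlin2[OF hD]
      by (simp add: abs_sgn mult.commute mult.left_commute)
    have "Nf (u', v', sgn \<nu>) \<le> 1"
      unfolding Nf_def u'_def v'_def using a b u v
      by (auto simp: abs_mult abs_sgn_eq mult_le_one)
    then have "pp (u', v', sgn \<nu>) \<le> S" unfolding pp_def using S0 by (simp add: mult_left_le)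
    then show ?thesis using Fp e by (metis order_trans)
  qed
  have hb: "b * XY.S2.dn h \<le> S - \<bar>\<nu>\<bar> - a * \<bar>g1 u\<bar>" if u: "norm u \<le> 1" for u
  proof -
    have "XY.S2.dn h \<le> (S - \<bar>\<nu>\<bar> - a * \<bar>g1 u\<bar>) / b"
    proof (rule XY.S2.dn_least)
      fix v :: 'b assume "v \<in> UNIV" and v: "norm v \<le> 1"
      have "b * \<bar>h v\<bar> \<le> S - \<bar>\<nu>\<bar> - a * \<bar>g1 u\<bar>" using inner[OF u v] by linarith
      then show "\<bar>h v\<bar> \<le> (S - \<bar>\<nu>\<bar> - a * \<bar>g1 u\<bar>) / b"
        using b by (simp add: le_divide_eq mult.commute)
    qed
    then show ?thesis using b by (simp add: le_divide_eq mult.commute)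
  qed
  have sumb: "a * XY.S1.dn g1 + b * XY.S2.dn h + \<bar>\<nu>\<bar> \<le> S"
  proof -
    have "XY.S1.dn g1 \<le> (S - \<bar>\<nu>\<bar> - b * XY.S2.dn h) / a"
    proof (rule XY.S1.dn_least)
      fix u :: 'a assume "u \<in> UNIV" and u: "norm u \<le> 1"
      have "a * \<bar>g1 u\<bar> \<le> S - \<bar>\<nu>\<bar> - b * XY.S2.dn h" using hb[OF u] by linarith
      then show "\<bar>g1 u\<bar> \<le> (S - \<bar>\<nu>\<bar> - b * XY.S2.dn h) / a"
        using a by (simp add: le_divide_eq mult.commute)
    qed
    then show ?thesis using a by (simp add: le_divide_eq mult.commute)
  qed
  have gdec: "g = (\<lambda>x. g1 x + XY.tc h x)"
  proof
    fix x
    have "g x = phi (x, 0)" unfolding phi_def by simp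
    also have "\<dots> = F (ell (x, 0))" by (rule Fell[symmetric])
    also have "\<dots> = g1 x + h (T x)" unfolding ell_def by (simp add: Fdec)
    finally show "g x = g1 x + XY.tc h x" by simp
  qed
  have mudec: "\<mu> = \<nu> - h w"
  proof -
    have "\<mu> = phi (0, 1)" unfolding phi_def using glin by simp
    also have "\<dots> = F (ell (0, 1))" by (rule Fell[symmetric])
    also have "\<dots> = h (- w) + \<nu>" unfolding ell_def using Tlin Dlin1[OF g1D] by (simp add: Fdec)
    also have "h (- w) = - h w" using Dlin2(2)[OF hD, of "-1" w] by simp
    finally show ?thesis by simp
  qed
  have "\<Phi> g = \<Phi> g1 + XY.biadj \<Phi> h"
    using gdec XY.S1.B_add[OF P g1D XY.tc_D[OF hD]] XY.biadj_apply[OF hD] by simp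
  then have "\<Phi> g + \<mu> = \<Phi> g1 + (XY.biadj \<Phi> h - h w) + \<nu>" using mudec by simp
  also have "\<dots> \<le> a * XY.S1.dn g1 + b * XY.S2.dn h + \<bar>\<nu>\<bar>"
    using Pa[OF g1D] Pb[OF hD] by (intro add_mono) auto
  also have "\<dots> \<le> S" by (rule sumb)
  finally show ?thesis .
qed


lemma one_sided:
  assumes P: "\<Phi> \<in> XY.S1.B" and Pa: "\<And>f. f\<in>XY.S1.D \<Longrightarrow> \<bar>\<Phi> f\<bar> \<le> a * XY.S1.dn f"
    and Pb: "\<And>h. h\<in>XY.S2.D \<Longrightarrow> \<bar>XY.biadj \<Phi> h - h w\<bar> \<le> b * XY.S2.dn h"
    and a: "a > 0" and b: "b > 0" and g: "g \<in> XY.S1.D" and a': "a' > a" and b': "b' > b"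
    and c: "c < \<Phi> g"
  shows "\<exists>x. norm x \<le> a' \<and> norm (T x - w) \<le> b' \<and> c < g x"
proof -
  define \<eta> where "\<eta> = \<Phi> g - c"
  have eta: "\<eta> > 0" using c \<eta>_def by simp
  define G where "G = XY.S1.dn g"
  have G: "G \<ge> 0" using XY.S1.dn_nn[OF g] G_def by simp
  define Q where "Q = G * a + \<bar>\<Phi> g\<bar> + \<eta>"
  have Q: "Q > 0" using G a eta Q_def by (simp add: add_nonneg_pos)
  define \<delta> where "\<delta> = min (1/2) (min (1 - a/a') (min (1 - b/b') (\<eta> / (4 * (G * a) + 1))))"
  have aa: "a / a' < 1" using a a' by simp
  have bb: "b / b' < 1" using b b' by simp
  have Ga: "G * a \<ge> 0" using G a by simp
  have dpos: "\<delta> > 0" unfolding \<delta>_def using aa bb eta Ga by simp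
  have d1: "\<delta> \<le> 1/2" unfolding \<delta>_def by (rule min.cobounded1)
  have d2: "\<delta> \<le> 1 - a/a'" unfolding \<delta>_def by (meson min.cobounded1 min.cobounded2 order_trans)
  have d3: "\<delta> \<le> 1 - b/b'" unfolding \<delta>_def by (meson min.cobounded1 min.cobounded2 order_trans)
  have d4: "\<delta> \<le> \<eta> / (4 * (G * a) + 1)" unfolding \<delta>_def by (meson min.cobounded2 order_trans)
  define M where "M = Q / \<delta>"
  have M: "M > 0" using Q dpos M_def by simp
  have "\<exists>x t. norm x \<le> a \<and> norm (T x - t *\<^sub>R w) \<le> b \<and> \<bar>t\<bar> \<le> 1 \<and> \<not> (g x + M * t \<le> \<Phi> g + M - \<eta>/2)"
  proof (rule ccontr)
    assume "\<not> ?thesis"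
    then have "\<Phi> g + M \<le> \<Phi> g + M - \<eta>/2" by (intro dual[OF P Pa Pb a b g]) auto
    then show False using eta by simp
  qed
  then obtain x t where x: "norm x \<le> a" and xt: "norm (T x - t *\<^sub>R w) \<le> b" and t: "\<bar>t\<bar> \<le> 1"
    and big: "\<Phi> g + M - \<eta>/2 < g x + M * t" by force
  have gx: "\<bar>g x\<bar> \<le> G * a"
  proof -
    have "\<bar>g x\<bar> \<le> G * norm x" using XY.S1.dn_bound[OF g] G_def by simp
    also have "\<dots> \<le> G * a" using x G by (simp add: mult_left_mono)
    finally show ?thesis .
  qed
  have t1: "t \<le> 1" using t by simp
  have "M * (1 - t) = M - M * t" by (simp add: algebra_simps)
  moreover have "g x \<le> \<bar>g x\<bar>" "- \<Phi> g \<le> \<bar>\<Phi> g\<bar>" by auto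
  ultimately have "M * (1 - t) < Q" using big gx eta unfolding Q_def by linarith
  then have "Q * ((1 - t) / \<delta>) < Q * 1" unfolding M_def by (simp add: algebra_simps)
  then have "(1 - t) / \<delta> < 1" using Q by (simp only: mult_less_cancel_left_pos)
  then have e2: "1 - t < \<delta>" using dpos by (simp add: divide_less_eq)
  have tpos: "t \<ge> 1/2" using e2 d1 by linarith
  have ta: "a \<le> a' * t"
  proof -
    have "a / a' \<le> t" using e2 d2 by linarith
    then show ?thesis using a a' by (simp add: divide_le_eq mult.commute)
  qed
  have tb: "b \<le> b' * t"
  proof -
    have "b / b' \<le> t" using e2 d3 by linarith
    then show ?thesis using b b' by (simp add: divide_le_eq mult.commute)
  qed
  have gx2: "\<Phi> g - \<eta>/2 < g x"
  proof -
    have "0 \<le> M * (1 - t)" using M t1 by simp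
    moreover have "M * (1 - t) = M - M * t" by (simp add: algebra_simps)
    ultimately show ?thesis using big by linarith
  qed
  define x' where "x' = (1/t) *\<^sub>R x"
  have n1: "norm x' \<le> a'"
  proof -
    have "norm x' = norm x / t" unfolding x'_def using tpos by simp
    also have "\<dots> \<le> a / t" using x tpos by (simp add: divide_right_mono)
    also have "\<dots> \<le> a'" using ta tpos by (simp add: divide_le_eq mult.commute)
    finally show ?thesis .
  qed
  have n2: "norm (T x' - w) \<le> b'"
  proof -
    have "T x' - w = (1/t) *\<^sub>R (T x - t *\<^sub>R w)" unfolding x'_def using Tlin tpos
      by (simp add: scaleR_diff_right)
    then have "norm (T x' - w) = norm (T x - t *\<^sub>R w) / t" using tpos by simp
    also have "\<dots> \<le> b / t" using xt tpos by (simp add: divide_right_mono)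
    also have "\<dots> \<le> b'" using tb tpos by (simp add: divide_le_eq mult.commute)
    finally show ?thesis .
  qed
  have gx': "g x' = g x / t" unfolding x'_def using Dlin1[OF g] by simp
  have diff: "\<bar>g x' - g x\<bar> = \<bar>g x\<bar> * (1 - t) / t"
  proof -
    have "g x' - g x = g x * (1 - t) / t" using gx' tpos by (simp add: field_simps)
    then show ?thesis using tpos t1 by (simp add: abs_mult)
  qed
  have "\<bar>g x\<bar> * (1 - t) \<le> (G * a) * \<delta>" using gx e2 t1 Ga by (intro mult_mono) auto
  then have "\<bar>g x\<bar> * (1 - t) / t \<le> (G * a) * \<delta> / t" using tpos by (simp add: divide_right_mono)
  also have "\<dots> \<le> (G * a) * \<delta> * 2"
  proof -
    have "((G * a) * \<delta>) * 1 \<le> ((G * a) * \<delta>) * (2 * t)" using tpos Ga dpos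
      by (intro mult_left_mono) auto
    then have "(G * a) * \<delta> \<le> (G * a) * \<delta> * 2 * t" by (simp add: mult.assoc)
    then show ?thesis using tpos by (simp add: divide_le_eq)
  qed
  also have "\<dots> \<le> (G * a) * (\<eta> / (4 * (G * a) + 1)) * 2"
    using mult_right_mono[OF mult_left_mono[OF d4 Ga], of 2] by simp
  also have "\<dots> < \<eta> / 2"
    using Ga eta by (simp add: field_simps)
  finally have "\<bar>g x' - g x\<bar> < \<eta> / 2" using diff by simp
  then have "c < g x'" using gx2 \<eta>_def by linarith
  then show ?thesis using n1 n2 by blast
qed

lemma GL:
  assumes P: "\<Phi> \<in> XY.S1.B" and Pa: "\<And>f. f\<in>XY.S1.D \<Longrightarrow> \<bar>\<Phi> f\<bar> \<le> a * XY.S1.dn f"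
    and Pb: "\<And>h. h\<in>XY.S2.D \<Longrightarrow> \<bar>XY.biadj \<Phi> h - h w\<bar> \<le> b * XY.S2.dn h"
    and a: "a > 0" and b: "b > 0" and g: "g \<in> XY.S1.D" and a': "a' > a" and b': "b' > b"
    and e: "\<epsilon> > 0"
  shows "\<exists>x. norm x \<le> a' \<and> norm (T x - w) \<le> b' \<and> \<bar>g x - \<Phi> g\<bar> < \<epsilon>"
proof -
  obtain x1 where x1: "norm x1 \<le> a'" "norm (T x1 - w) \<le> b'" "\<Phi> g - \<epsilon> < g x1"
    using one_sided[OF P Pa Pb a b g a' b', of "\<Phi> g - \<epsilon>"] e by auto
  have mg: "(\<lambda>x. (-1) * g x) \<in> XY.S1.D" by (rule XY.S1.D_scale[OF g])
  have Pmg: "\<Phi> (\<lambda>x. (-1) * g x) = - \<Phi> g" using XY.S1.B_sc[OF P g, of "-1"] by simp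
  obtain x2 where x2: "norm x2 \<le> a'" "norm (T x2 - w) \<le> b'" "- \<Phi> g - \<epsilon> < (-1) * g x2"
    using one_sided[OF P Pa Pb a b mg a' b', of "- \<Phi> g - \<epsilon>"] e Pmg by auto
  show ?thesis
  proof (cases "g x1 < \<Phi> g + \<epsilon>")
    case True then show ?thesis using x1 by (intro exI[of _ x1]) auto
  next
    case F1: False
    show ?thesis
    proof (cases "\<Phi> g - \<epsilon> < g x2")
      case True then show ?thesis using x2 by (intro exI[of _ x2]) auto
    next
      case F2: False
      define l where "l = (\<Phi> g - g x2) / (g x1 - g x2)"
      have dpos: "g x1 - g x2 > 0" using F1 F2 e by linarith
      have l0: "0 \<le> l" and l1: "l \<le> 1" unfolding l_def using F1 F2 dpos e
        by (auto simp: divide_le_eq)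
      define x where "x = l *\<^sub>R x1 + (1 - l) *\<^sub>R x2"
      have gx: "g x = \<Phi> g"
      proof -
        have "g x = l * g x1 + (1 - l) * g x2" unfolding x_def using Dlin1[OF g] by simp
        also have "\<dots> = g x2 + l * (g x1 - g x2)" by (simp add: algebra_simps)
        also have "\<dots> = \<Phi> g" unfolding l_def using dpos by simp
        finally show ?thesis .
      qed
      have nx: "norm x \<le> a'"
      proof -
        have "norm x \<le> norm (l *\<^sub>R x1) + norm ((1 - l) *\<^sub>R x2)" unfolding x_def by (rule norm_triangle_ineq)
        also have "\<dots> = l * norm x1 + (1 - l) * norm x2" using l0 l1 by simp
        also have "\<dots> \<le> l * a' + (1 - l) * a'" using x1 x2 l0 l1 by (intro add_mono mult_left_mono) auto
        finally show ?thesis by (simp add: algebra_simps)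
      qed
      have nT: "norm (T x - w) \<le> b'"
      proof -
        have "T x = l *\<^sub>R T x1 + (1 - l) *\<^sub>R T x2" unfolding x_def by (simp only: Tlin(1) Tlin(2))
        then have "T x - w = l *\<^sub>R (T x1 - w) + (1 - l) *\<^sub>R (T x2 - w)"
          by (simp add: algebra_simps)
        then have "norm (T x - w) \<le> norm (l *\<^sub>R (T x1 - w)) + norm ((1 - l) *\<^sub>R (T x2 - w))"
          by (simp only: norm_triangle_ineq)
        also have "\<dots> = l * norm (T x1 - w) + (1 - l) * norm (T x2 - w)" using l0 l1 by simp
        also have "\<dots> \<le> l * b' + (1 - l) * b'" using x1 x2 l0 l1 by (intro add_mono mult_left_mono) auto
        finally show ?thesis by (simp add: algebra_simps)
      qed
      show ?thesis using gx nx nT e by (intro exI[of _ x]) auto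
    qed
  qed
qed

end

(* ---- from M1.thy ---- *)
lemma uf_Lim_const: "free_ultrafilter_nat U \<Longrightarrow> Lim U (\<lambda>j. c) = c"
  using uf_Lim[of U "\<lambda>j. c" c] by simp

lemma uf_Lim_add:
  fixes s t :: "nat \<Rightarrow> real"
  assumes U: "free_ultrafilter_nat U" and s: "\<And>j. \<bar>s j\<bar> \<le> M" and t: "\<And>j. \<bar>t j\<bar> \<le> N"
  shows "Lim U (\<lambda>j. s j + t j) = Lim U s + Lim U t"
  by (rule uf_Lim[OF U], rule tendsto_add[OF uf_Lim_conv[of U s M, OF U s] uf_Lim_conv[of U t N, OF U t]])

lemma uf_Lim_scale:
  fixes s :: "nat \<Rightarrow> real"
  assumes U: "free_ultrafilter_nat U" and s: "\<And>j. \<bar>s j\<bar> \<le> M"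
  shows "Lim U (\<lambda>j. c * s j) = c * Lim U s"
  by (rule uf_Lim[OF U], rule tendsto_mult_left[OF uf_Lim_conv[of U s M, OF U s]])

lemma uf_Lim_le:
  fixes s t :: "nat \<Rightarrow> real"
  assumes U: "free_ultrafilter_nat U" and s: "\<And>j. \<bar>s j\<bar> \<le> M" and t: "\<And>j. \<bar>t j\<bar> \<le> N"
    and le: "\<And>j. s j \<le> t j"
  shows "Lim U s \<le> Lim U t"
  by (rule tendsto_le[OF uf_nb[OF U] uf_Lim_conv[of U t N, OF U t] uf_Lim_conv[of U s M, OF U s]]) (use le in auto)

context
  fixes T :: "'a::real_normed_vector \<Rightarrow> 'b::real_normed_vector" and K :: real and U :: "nat filter"
  assumes sopT: "sop (UNIV::'a set) (+) (*\<^sub>R) norm (UNIV::'b set) (+) (*\<^sub>R) norm T K"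
    and U: "free_ultrafilter_nat U"
begin

interpretation XY: sop "UNIV::'a set" "(+)" "(*\<^sub>R)" norm "UNIV::'b set" "(+)" "(*\<^sub>R)" norm T K
  by (rule sopT)

lemma Kfacts: "0 \<le> K" "\<And>x. norm (T x) \<le> K * norm x"
  using XY.K_nn XY.T_bd by auto

lemma blT: "bounded_linear T"
  by (rule bounded_linear_intro[of T K]) (use XY.T_ad XY.T_sc Kfacts in \<open>auto simp: mult.commute\<close>)

interpretation UU: sop "linf::(nat \<Rightarrow> 'a) set" seq_add seq_scale "unorm U" "linf::(nat \<Rightarrow> 'b) set" seq_add seq_scale "unorm U"
  "\<lambda>x j. T (x j)" K
  by (rule sop_linf[OF U blT Kfacts])

abbreviation "Gf g \<equiv> (\<lambda>x. if x \<in> linf then Lim U (\<lambda>j. g j (x j)) else 0)"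

lemma Gbound: assumes gD: "\<And>j. g j \<in> XY.S1.D" and gB: "\<And>j. XY.S1.dn (g j) \<le> B"
  and x: "x \<in> linf" shows "\<exists>M. \<forall>j. \<bar>g j (x j)\<bar> \<le> M"
proof -
  obtain M where M: "\<And>j. norm (x j) \<le> M" using x linf_iff by metis
  have "\<bar>g j (x j)\<bar> \<le> B * M" for j
  proof -
    have "\<bar>g j (x j)\<bar> \<le> XY.S1.dn (g j) * norm (x j)" by (rule XY.S1.dn_bound[OF gD]) simp
    also have "\<dots> \<le> B * M" using gB[of j] M[of j] XY.S1.dn_nn[OF gD[of j]]
      by (meson mult_mono norm_ge_zero order_trans)
    finally show ?thesis .
  qed
  then show ?thesis by blast
qed

lemma G_D: assumes gD: "\<And>j. g j \<in> XY.S1.D" and gB: "\<And>j. XY.S1.dn (g j) \<le> B"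
  shows "Gf g \<in> UU.S1.D"
proof (rule UU.S1.D_intro[where C=B])
  fix x y :: "nat \<Rightarrow> 'a" assume x: "x \<in> linf" and y: "y \<in> linf"
  obtain M where M: "\<And>j. \<bar>g j (x j)\<bar> \<le> M" using Gbound[of g B x, OF gD gB x] by blast
  obtain N where N: "\<And>j. \<bar>g j (y j)\<bar> \<le> N" using Gbound[of g B y, OF gD gB y] by blast
  have "Lim U (\<lambda>j. g j (seq_add x y j)) = Lim U (\<lambda>j. g j (x j) + g j (y j))"
    unfolding seq_add_def using Dlin1[OF sopT gD] by simp
  also have "\<dots> = Lim U (\<lambda>j. g j (x j)) + Lim U (\<lambda>j. g j (y j))"
    by (rule uf_Lim_add[of U "\<lambda>j. g j (x j)" M "\<lambda>j. g j (y j)" N, OF U M N])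
  finally show "Gf g (seq_add x y) = Gf g x + Gf g y" using x y UU.S1.ad_cl[OF x y] by simp
next
  fix c and x :: "nat \<Rightarrow> 'a" assume x: "x \<in> linf"
  obtain M where M: "\<And>j. \<bar>g j (x j)\<bar> \<le> M" using Gbound[of g B x, OF gD gB x] by blast
  have "Lim U (\<lambda>j. g j (seq_scale c x j)) = Lim U (\<lambda>j. c * g j (x j))"
    unfolding seq_scale_def using Dlin1[OF sopT gD] by simp
  also have "\<dots> = c * Lim U (\<lambda>j. g j (x j))" by (rule uf_Lim_scale[of U "\<lambda>j. g j (x j)" M, OF U M])
  finally show "Gf g (seq_scale c x) = c * Gf g x" using x UU.S1.sc_cl[OF x] by simp
next
  fix x :: "nat \<Rightarrow> 'a" assume x: "x \<in> linf"
  obtain M where M: "\<And>j. \<bar>g j (x j)\<bar> \<le> M" using Gbound[of g B x, OF gD gB x] by blast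
  have "((\<lambda>j. \<bar>g j (x j)\<bar>) \<longlongrightarrow> \<bar>Lim U (\<lambda>j. g j (x j))\<bar>) U"
    by (rule tendsto_rabs[OF uf_Lim_conv[of U "\<lambda>j. g j (x j)" M, OF U M]])
  moreover have "((\<lambda>j. B * norm (x j)) \<longlongrightarrow> B * unorm U x) U"
    by (intro tendsto_mult_left unorm_conv[OF U x])
  moreover have "\<bar>g j (x j)\<bar> \<le> B * norm (x j)" for j
  proof -
    have "\<bar>g j (x j)\<bar> \<le> XY.S1.dn (g j) * norm (x j)" by (rule XY.S1.dn_bound[OF gD]) simp
    also have "\<dots> \<le> B * norm (x j)" using gB[of j] by (simp add: mult_right_mono)
    finally show ?thesis .
  qed
  ultimately have "\<bar>Lim U (\<lambda>j. g j (x j))\<bar> \<le> B * unorm U x"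
    by (intro tendsto_le[OF uf_nb[OF U]]) auto
  then show "\<bar>Gf g x\<bar> \<le> B * unorm U x" using x by simp
qed simp


lemma key_est:
  fixes Phi :: "nat \<Rightarrow> ('a \<Rightarrow> real) \<Rightarrow> real" and W :: "nat \<Rightarrow> 'b"
  assumes GLj: "\<And>j g \<epsilon>. g \<in> XY.S1.D \<Longrightarrow> \<epsilon> > 0 \<Longrightarrow>
      \<exists>x. norm x \<le> 3 \<and> norm (T x - W j) \<le> 2 / (real j + 1) \<and> \<bar>g x - Phi j g\<bar> < \<epsilon>"
    and Pa: "\<And>j f. f \<in> XY.S1.D \<Longrightarrow> \<bar>Phi j f\<bar> \<le> 2 * XY.S1.dn f"
    and Wl: "W \<in> linf" and gD: "\<And>j. g j \<in> XY.S1.D" and gB: "\<And>j. XY.S1.dn (g j) \<le> B"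
    and h: "h \<in> UU.S2.D"
  shows "Lim U (\<lambda>j. Phi j (g j)) + h W \<le> 3 * UU.S1.dn (\<lambda>x. Gf g x + UU.tc h x)"
proof (rule field_le_epsilon)
  fix \<epsilon> :: real assume e: "0 < \<epsilon>"
  define F where "F = (\<lambda>x. Gf g x + UU.tc h x)"
  have FD: "F \<in> UU.S1.D" unfolding F_def
    by (rule UU.S1.D_plus[OF G_D[of g B, OF gD gB] UU.tc_D[OF h]])
  have "\<forall>j. \<exists>x. norm x \<le> 3 \<and> norm (T x - W j) \<le> 2 / (real j + 1) \<and> \<bar>g j x - Phi j (g j)\<bar> < \<epsilon>"
    using GLj[OF gD e] by blast
  then obtain X where X: "\<And>j. norm (X j) \<le> 3" "\<And>j. norm (T (X j) - W j) \<le> 2 / (real j + 1)"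
    "\<And>j. \<bar>g j (X j) - Phi j (g j)\<bar> < \<epsilon>" by metis
  have Xl: "X \<in> linf" using X(1) linf_iff by blast
  have uX: "unorm U X \<le> 3" by (rule unorm_bound[OF U Xl X(1)])
  have s0: "0 \<le> UU.S1.dn F" by (rule UU.S1.dn_nn[OF FD])
  have FX: "F X \<le> 3 * UU.S1.dn F"
  proof -
    have "\<bar>F X\<bar> \<le> UU.S1.dn F * unorm U X" by (rule UU.S1.dn_bound[OF FD Xl])
    also have "\<dots> \<le> UU.S1.dn F * 3" using uX s0 by (rule mult_left_mono)
    finally show ?thesis by simp
  qed
  have FXe: "F X = Lim U (\<lambda>j. g j (X j)) + h (\<lambda>j. T (X j))" unfolding F_def using Xl by simp
  obtain M where M: "\<And>j. \<bar>g j (X j)\<bar> \<le> M" using Gbound[of g B X, OF gD gB Xl] by blast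
  have PB: "\<bar>Phi j (g j)\<bar> \<le> 2 * B" for j
    using Pa[of "g j" j, OF gD[of j]] gB[of j] by linarith
  have L1: "Lim U (\<lambda>j. Phi j (g j)) \<le> Lim U (\<lambda>j. g j (X j) + \<epsilon>)"
  proof (rule uf_Lim_le[OF U, of _ "2 * B" _ "M + \<epsilon>"])
    fix j show "\<bar>Phi j (g j)\<bar> \<le> 2 * B" by (rule PB)
    show "\<bar>g j (X j) + \<epsilon>\<bar> \<le> M + \<epsilon>" using M[of j] e by linarith
    show "Phi j (g j) \<le> g j (X j) + \<epsilon>" using X(3)[of j] by linarith
  qed
  also have "\<dots> = Lim U (\<lambda>j. g j (X j)) + \<epsilon>"
    using uf_Lim_add[of U "\<lambda>j. g j (X j)" M "\<lambda>j. \<epsilon>" \<epsilon>, OF U M] e uf_Lim_const[OF U] by simp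
  finally have L1': "Lim U (\<lambda>j. Phi j (g j)) \<le> Lim U (\<lambda>j. g j (X j)) + \<epsilon>" .
  define Z where "Z = seq_add (\<lambda>j. T (X j)) (seq_scale (-1) W)"
  have TXl: "(\<lambda>j. T (X j)) \<in> linf" using UU.T_cl[OF Xl] .
  have Wl': "seq_scale (-1) W \<in> linf" using UU.S2.sc_cl[OF Wl] .
  have Zl: "Z \<in> linf" unfolding Z_def using UU.S2.ad_cl[OF TXl Wl'] .
  have hZ: "h Z = h (\<lambda>j. T (X j)) - h W"
    unfolding Z_def using UU.S2.D_add[OF h TXl Wl'] UU.S2.D_sc[OF h Wl, of "-1"] by simp
  have "unorm U Z = 0"
  proof (rule unorm_zero[OF U Zl])
    fix j show "norm (Z j) \<le> 2 / (real j + 1)" unfolding Z_def seq_add_def seq_scale_def using X(2)[of j] by simp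
  qed
  then have "\<bar>h Z\<bar> \<le> 0" using UU.S2.dn_bound[OF h Zl] by simp
  then have hTX: "h (\<lambda>j. T (X j)) = h W" using hZ by simp
  show "Lim U (\<lambda>j. Phi j (g j)) + h W \<le> 3 * UU.S1.dn (\<lambda>x. Gf g x + UU.tc h x) + \<epsilon>"
    using L1' FX FXe hTX unfolding F_def by simp
qed


lemma construct:
  fixes Phi :: "nat \<Rightarrow> ('a \<Rightarrow> real) \<Rightarrow> real" and W :: "nat \<Rightarrow> 'b"
  assumes PB: "\<And>j. Phi j \<in> XY.S1.B"
    and Pa: "\<And>j f. f \<in> XY.S1.D \<Longrightarrow> \<bar>Phi j f\<bar> \<le> 2 * XY.S1.dn f"
    and Pd: "\<And>j x. \<exists>f\<in>XY.S1.D. XY.S1.dn f \<le> 1 \<and> 1/2 < \<bar>Phi j f - f x\<bar>"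
    and Pb: "\<And>j h. h \<in> XY.S2.D \<Longrightarrow> \<bar>XY.biadj (Phi j) h - h (W j)\<bar> \<le> 1 / (real j + 1) * XY.S2.dn h"
  shows "\<exists>\<Psi>\<in>UU.S1.B. \<Psi> \<notin> UU.S1.cn ` linf \<and> UU.biadj \<Psi> \<in> UU.S2.cn ` linf"
proof -
  have GLj: "\<exists>x. norm x \<le> 3 \<and> norm (T x - W j) \<le> 2 / (real j + 1) \<and> \<bar>g x - Phi j g\<bar> < \<epsilon>"
    if g: "g \<in> XY.S1.D" and e: "\<epsilon> > 0" for j g \<epsilon>
  proof -
    have b: "(0::real) < 1 / (real j + 1)" by simp
    have b': "1 / (real j + 1) < 2 / (real j + 1)" by (simp add: divide_strict_right_mono)
    show ?thesis
      by (rule GL[OF sopT PB[of j] _ _ _ b g _ b' e]) (use Pa Pb in auto)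
  qed
  have Wb: "norm (W j) \<le> 3 * K + 2" for j
  proof -
    obtain x where x: "norm x \<le> 3" "norm (T x - W j) \<le> 2 / (real j + 1)"
      using GLj[OF XY.S1.D_zero, of 1 j] by auto
    have "2 / (real j + 1) \<le> 2" by (simp add: divide_le_eq)
    moreover have "norm (T x) \<le> 3 * K"
    proof -
      have "K * norm x \<le> K * 3" using x(1) Kfacts(1) by (rule mult_left_mono)
      then show ?thesis using Kfacts(2)[of x] by simp
    qed
    moreover have "norm (W j) \<le> norm (T x) + norm (T x - W j)" by (metis norm_triangle_sub norm_minus_commute)
    ultimately show ?thesis using x(2) by linarith
  qed
  have Wl: "W \<in> linf" using Wb linf_iff by blast
  define E where "E = (UU.S1.D :: ((nat \<Rightarrow> 'a) \<Rightarrow> real) set)"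
  define Lam where "Lam = {z :: (nat \<Rightarrow> 'a \<Rightarrow> real) \<times> ((nat \<Rightarrow> 'b) \<Rightarrow> real).
     (\<forall>j. fst z j \<in> XY.S1.D) \<and> (\<exists>B. \<forall>j. XY.S1.dn (fst z j) \<le> B) \<and> snd z \<in> UU.S2.D}"
  define ell where "ell z = (\<lambda>x. Gf (fst z) x + UU.tc (snd z) x)" for z :: "(nat \<Rightarrow> 'a \<Rightarrow> real) \<times> ((nat \<Rightarrow> 'b) \<Rightarrow> real)"
  define phi where "phi z = Lim U (\<lambda>j. Phi j (fst z j)) + snd z W" for z :: "(nat \<Rightarrow> 'a \<Rightarrow> real) \<times> ((nat \<Rightarrow> 'b) \<Rightarrow> real)"
  define pp where "pp F = 3 * UU.S1.dn F" for F :: "(nat \<Rightarrow> 'a) \<Rightarrow> real"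
  have LamD: "\<And>j. fst z j \<in> XY.S1.D" "\<exists>B. \<forall>j. XY.S1.dn (fst z j) \<le> B" "snd z \<in> UU.S2.D" if "z \<in> Lam" for z
    using that unfolding Lam_def by auto
  have PhiB: "\<exists>M. \<forall>j. \<bar>Phi j (fst z j)\<bar> \<le> M" if z: "z \<in> Lam" for z
  proof -
    obtain B where B: "\<And>j. XY.S1.dn (fst z j) \<le> B" using LamD(2)[OF z] by blast
    have "\<bar>Phi j (fst z j)\<bar> \<le> 2 * B" for j using Pa[of "fst z j" j, OF LamD(1)[OF z]] B[of j] by linarith
    then show ?thesis by blast
  qed
  have GB: "\<exists>M. \<forall>j. \<bar>fst z j (x j)\<bar> \<le> M" if z: "z \<in> Lam" and x: "x \<in> linf" for z x
  proof -
    obtain B where B: "\<And>j. XY.S1.dn (fst z j) \<le> B" using LamD(2)[OF z] by blast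
    show ?thesis by (rule Gbound[of "fst z" B x, OF LamD(1)[OF z] B x])
  qed
  have ellD: "ell z \<in> UU.S1.D" if z: "z \<in> Lam" for z
  proof -
    obtain B where B: "\<And>j. XY.S1.dn (fst z j) \<le> B" using LamD(2)[OF z] by blast
    show ?thesis unfolding ell_def
      by (rule UU.S1.D_plus[OF G_D[of "fst z" B, OF LamD(1)[OF z] B] UU.tc_D[OF LamD(3)[OF z]]])
  qed
  have "\<exists>Psi. (\<forall>x\<in>E. \<forall>y\<in>E. Psi (x+y) = Psi x + Psi y) \<and> (\<forall>c. \<forall>x\<in>E. Psi (c *\<^sub>R x) = c * Psi x)
     \<and> (\<forall>a\<in>Lam. Psi (ell a) = phi a) \<and> (\<forall>x\<in>E. Psi x \<le> pp x)"
  proof (rule hb_param)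
    show "0 \<in> E" unfolding E_def zero_fun_def by (rule UU.S1.D_zero)
    show "x + y \<in> E" if "x \<in> E" "y \<in> E" for x y
      using UU.S1.D_plus that unfolding E_def plus_fun_def by blast
    show "c *\<^sub>R x \<in> E" if "x \<in> E" for c x
      using UU.S1.D_scale that unfolding E_def scaleR_fun_def by simp
    show "0 \<in> Lam"
      unfolding Lam_def using XY.S1.D_zero UU.S2.D_zero XY.S1.dn_zero by (auto simp: zero_fun_def)
    show "a + b \<in> Lam" if a: "a \<in> Lam" and b: "b \<in> Lam" for a b
    proof -
      obtain A where A: "\<And>j. XY.S1.dn (fst a j) \<le> A" using LamD(2)[OF a] by blast
      obtain B where B: "\<And>j. XY.S1.dn (fst b j) \<le> B" using LamD(2)[OF b] by blast
      have "XY.S1.dn (fst (a + b) j) \<le> A + B" for j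
        using XY.S1.dn_plus[OF LamD(1)[OF a, of j] LamD(1)[OF b, of j]] A[of j] B[of j]
        by (simp add: plus_fun_def)
      moreover have "fst (a + b) j \<in> XY.S1.D" for j
        using XY.S1.D_plus[OF LamD(1)[OF a, of j] LamD(1)[OF b, of j]] by (simp add: plus_fun_def)
      moreover have "snd (a + b) \<in> UU.S2.D"
        using UU.S2.D_plus[OF LamD(3)[OF a] LamD(3)[OF b]] by (simp add: plus_fun_def)
      ultimately show ?thesis unfolding Lam_def by blast
    qed
    show "c *\<^sub>R a \<in> Lam" if a: "a \<in> Lam" for c a
    proof -
      obtain A where A: "\<And>j. XY.S1.dn (fst a j) \<le> A" using LamD(2)[OF a] by blast
      have "XY.S1.dn (fst (c *\<^sub>R a) j) \<le> \<bar>c\<bar> * A" for j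
        using XY.S1.dn_scale[OF LamD(1)[OF a, of j], of c] A[of j] abs_ge_zero[of c]
        by (simp add: scaleR_fun_def mult_left_mono)
      moreover have "fst (c *\<^sub>R a) j \<in> XY.S1.D" for j
        using XY.S1.D_scale[OF LamD(1)[OF a, of j], of c] by (simp add: scaleR_fun_def)
      moreover have "snd (c *\<^sub>R a) \<in> UU.S2.D"
        using UU.S2.D_scale[OF LamD(3)[OF a], of c] by (simp add: scaleR_fun_def)
      ultimately show ?thesis unfolding Lam_def by blast
    qed
    show "ell a \<in> E" if "a \<in> Lam" for a using ellD that E_def by blast
    show "ell (a + b) = ell a + ell b" if a: "a \<in> Lam" and b: "b \<in> Lam" for a b
    proof
      fix x :: "nat \<Rightarrow> 'a"
      show "ell (a + b) x = (ell a + ell b) x"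
      proof (cases "x \<in> linf")
        case True
        obtain M where M: "\<And>j. \<bar>fst a j (x j)\<bar> \<le> M" using GB[OF a True] by blast
        obtain N where N: "\<And>j. \<bar>fst b j (x j)\<bar> \<le> N" using GB[OF b True] by blast
        have "Lim U (\<lambda>j. fst (a + b) j (x j)) = Lim U (\<lambda>j. fst a j (x j) + fst b j (x j))"
          by (simp add: plus_fun_def)
        also have "\<dots> = Lim U (\<lambda>j. fst a j (x j)) + Lim U (\<lambda>j. fst b j (x j))"
          by (rule uf_Lim_add[of U "\<lambda>j. fst a j (x j)" M "\<lambda>j. fst b j (x j)" N, OF U M N])
        finally show ?thesis unfolding ell_def using True by (simp add: plus_fun_def)
      next
        case False then show ?thesis unfolding ell_def by (simp add: plus_fun_def)
      qed
    qed
    show "ell (c *\<^sub>R a) = c *\<^sub>R ell a" if a: "a \<in> Lam" for c a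
    proof
      fix x :: "nat \<Rightarrow> 'a"
      show "ell (c *\<^sub>R a) x = (c *\<^sub>R ell a) x"
      proof (cases "x \<in> linf")
        case True
        obtain M where M: "\<And>j. \<bar>fst a j (x j)\<bar> \<le> M" using GB[OF a True] by blast
        have "Lim U (\<lambda>j. fst (c *\<^sub>R a) j (x j)) = Lim U (\<lambda>j. c * fst a j (x j))"
          by (simp add: scaleR_fun_def)
        also have "\<dots> = c * Lim U (\<lambda>j. fst a j (x j))"
          by (rule uf_Lim_scale[of U "\<lambda>j. fst a j (x j)" M, OF U M])
        finally show ?thesis unfolding ell_def using True by (simp add: scaleR_fun_def distrib_left)
      next
        case False then show ?thesis unfolding ell_def by (simp add: scaleR_fun_def)
      qed
    qed
    show "phi (a + b) = phi a + phi b" if a: "a \<in> Lam" and b: "b \<in> Lam" for a b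
    proof -
      obtain M where M: "\<And>j. \<bar>Phi j (fst a j)\<bar> \<le> M" using PhiB[OF a] by blast
      obtain N where N: "\<And>j. \<bar>Phi j (fst b j)\<bar> \<le> N" using PhiB[OF b] by blast
      have "Phi j (fst (a + b) j) = Phi j (fst a j) + Phi j (fst b j)" for j
        using XY.S1.B_add[OF PB[of j] LamD(1)[OF a, of j] LamD(1)[OF b, of j]] by (simp add: plus_fun_def)
      then have "Lim U (\<lambda>j. Phi j (fst (a + b) j)) = Lim U (\<lambda>j. Phi j (fst a j) + Phi j (fst b j))"
        by simp
      also have "\<dots> = Lim U (\<lambda>j. Phi j (fst a j)) + Lim U (\<lambda>j. Phi j (fst b j))"
        by (rule uf_Lim_add[of U "\<lambda>j. Phi j (fst a j)" M "\<lambda>j. Phi j (fst b j)" N, OF U M N])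
      finally show ?thesis unfolding phi_def by (simp add: plus_fun_def)
    qed
    show "phi (c *\<^sub>R a) = c * phi a" if a: "a \<in> Lam" for c a
    proof -
      obtain M where M: "\<And>j. \<bar>Phi j (fst a j)\<bar> \<le> M" using PhiB[OF a] by blast
      have "Phi j (fst (c *\<^sub>R a) j) = c * Phi j (fst a j)" for j
        using XY.S1.B_sc[OF PB[of j] LamD(1)[OF a, of j], of c] by (simp add: scaleR_fun_def)
      then have "Lim U (\<lambda>j. Phi j (fst (c *\<^sub>R a) j)) = Lim U (\<lambda>j. c * Phi j (fst a j))"
        by simp
      also have "\<dots> = c * Lim U (\<lambda>j. Phi j (fst a j))"
        by (rule uf_Lim_scale[of U "\<lambda>j. Phi j (fst a j)" M, OF U M])
      finally show ?thesis unfolding phi_def by (simp add: scaleR_fun_def distrib_left)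
    qed
    show "phi a \<le> pp (ell a)" if a: "a \<in> Lam" for a
    proof -
      obtain B where B: "\<And>j. XY.S1.dn (fst a j) \<le> B" using LamD(2)[OF a] by blast
      show ?thesis unfolding phi_def pp_def ell_def
        by (rule key_est[of W Phi "fst a" B "snd a", OF GLj Pa Wl LamD(1)[OF a] B LamD(3)[OF a]])
    qed
    show "pp (x + y) \<le> pp x + pp y" if "x \<in> E" "y \<in> E" for x y
      using UU.S1.dn_plus[of x y] that unfolding pp_def E_def plus_fun_def by simp
    show "pp (c *\<^sub>R x) = c * pp x" if "x \<in> E" "0 \<le> c" for c x
      using UU.S1.dn_scale[of x c] that unfolding pp_def E_def scaleR_fun_def by simp
  qed
  then obtain Psi0 where Padd: "\<And>x y. x\<in>E \<Longrightarrow> y\<in>E \<Longrightarrow> Psi0 (x+y) = Psi0 x + Psi0 y"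
    and Psc: "\<And>c x. x\<in>E \<Longrightarrow> Psi0 (c *\<^sub>R x) = c * Psi0 x"
    and Pell: "\<And>a. a\<in>Lam \<Longrightarrow> Psi0 (ell a) = phi a" and Pp: "\<And>x. x\<in>E \<Longrightarrow> Psi0 x \<le> pp x" by blast
  define \<Psi> where "\<Psi> F = (if F \<in> E then Psi0 F else 0)" for F
  have PsiB: "\<Psi> \<in> UU.S1.B"
  proof (rule UU.S1.B_intro[where C=3])
    fix f g assume f: "f \<in> UU.S1.D" and g: "g \<in> UU.S1.D"
    show "\<Psi> (\<lambda>x. f x + g x) = \<Psi> f + \<Psi> g"
      using Padd[of f g] f g UU.S1.D_plus[OF f g] unfolding \<Psi>_def E_def plus_fun_def by simp
  next
    fix c f assume f: "f \<in> UU.S1.D"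
    show "\<Psi> (\<lambda>x. c * f x) = c * \<Psi> f"
      using Psc[of f c] f UU.S1.D_scale[OF f] unfolding \<Psi>_def E_def scaleR_fun_def by simp
  next
    fix f assume "f \<notin> UU.S1.D" then show "\<Psi> f = 0" unfolding \<Psi>_def E_def by simp
  next
    fix f assume f: "f \<in> UU.S1.D"
    have "Psi0 f \<le> 3 * UU.S1.dn f" using Pp[of f] f unfolding pp_def E_def by simp
    moreover have "- Psi0 f \<le> 3 * UU.S1.dn f"
    proof -
      have "Psi0 ((-1) *\<^sub>R f) = - Psi0 f" using Psc[of f "-1"] f E_def by simp
      moreover have "Psi0 ((-1) *\<^sub>R f) \<le> 3 * UU.S1.dn ((-1) *\<^sub>R f)"
        using Pp[of "(-1) *\<^sub>R f"] UU.S1.D_scale[OF f, of "-1"] unfolding pp_def E_def scaleR_fun_def by simp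
      moreover have "UU.S1.dn ((-1) *\<^sub>R f) = UU.S1.dn f"
        using UU.S1.dn_scale[OF f, of "-1"] unfolding scaleR_fun_def by simp
      ultimately show ?thesis by simp
    qed
    ultimately show "\<bar>\<Psi> f\<bar> \<le> 3 * UU.S1.dn f" using f unfolding \<Psi>_def E_def by simp
  qed
  have claim1: "UU.biadj \<Psi> = UU.S2.cn W"
  proof
    fix h :: "(nat \<Rightarrow> 'b) \<Rightarrow> real"
    show "UU.biadj \<Psi> h = UU.S2.cn W h"
    proof (cases "h \<in> UU.S2.D")
      case True
      have z: "(0, h) \<in> Lam" unfolding Lam_def using True XY.S1.D_zero XY.S1.dn_zero
        by (auto simp: zero_fun_def)
      have e: "ell (0, h) = UU.tc h" unfolding ell_def using uf_Lim_const[OF U, of 0]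
        by (auto simp: zero_fun_def)
      have "UU.biadj \<Psi> h = \<Psi> (UU.tc h)" by (rule UU.biadj_apply[OF True])
      also have "\<dots> = Psi0 (ell (0, h))" unfolding \<Psi>_def E_def using e ellD[OF z] by simp
      also have "\<dots> = phi (0, h)" by (rule Pell[OF z])
      also have "\<dots> = h W" unfolding phi_def using XY.S1.B_zero[OF PB] uf_Lim_const[OF U, of 0]
        by (simp add: zero_fun_def)
      finally show ?thesis using UU.S2.cn_apply[OF True] by simp
    next
      case False
      then show ?thesis using UU.biadj_out[OF False] by (simp add: scanon_def)
    qed
  qed
  have claim2: "\<Psi> \<notin> UU.S1.cn ` linf"
  proof
    assume "\<Psi> \<in> UU.S1.cn ` linf"
    then obtain u where ul: "u \<in> linf" and Pu: "\<Psi> = UU.S1.cn u" by blast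
    have "\<forall>j. \<exists>f. f \<in> XY.S1.D \<and> XY.S1.dn f \<le> 1 \<and> 1/2 < \<bar>Phi j f - f (u j)\<bar>" using Pd by blast
    then obtain f where fD: "\<And>j. f j \<in> XY.S1.D" and fn: "\<And>j. XY.S1.dn (f j) \<le> 1"
      and fb: "\<And>j. 1/2 < \<bar>Phi j (f j) - f j (u j)\<bar>" by metis
    define \<sigma> where "\<sigma> j = sgn (Phi j (f j) - f j (u j))" for j
    define g where "g j = (\<lambda>x. \<sigma> j * f j x)" for j
    have gD: "g j \<in> XY.S1.D" for j unfolding g_def by (rule XY.S1.D_scale[OF fD])
    have sig: "\<bar>\<sigma> j\<bar> \<le> 1" for j unfolding \<sigma>_def by (simp add: abs_sgn_eq)
    have gn: "XY.S1.dn (g j) \<le> 1" for j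
      unfolding g_def using XY.S1.dn_scale[OF fD, of "\<sigma> j" j] fn[of j] sig[of j] XY.S1.dn_nn[OF fD[of j]]
      by (simp add: mult_le_one)
    have sgnabs: "sgn (y::real) * y = \<bar>y\<bar>" for y by (simp add: sgn_if)
    have gval: "Phi j (g j) - g j (u j) = \<bar>Phi j (f j) - f j (u j)\<bar>" for j
    proof -
      have "Phi j (g j) = \<sigma> j * Phi j (f j)" unfolding g_def by (rule XY.S1.B_sc[OF PB fD])
      moreover have "g j (u j) = \<sigma> j * f j (u j)" unfolding g_def by simp
      ultimately have "Phi j (g j) - g j (u j) = \<sigma> j * (Phi j (f j) - f j (u j))"
        by (simp add: right_diff_distrib)
      then show ?thesis unfolding \<sigma>_def using sgnabs by simp
    qed
    have z: "(g, 0) \<in> Lam" unfolding Lam_def using gD gn UU.S2.D_zero by (auto simp: zero_fun_def)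
    have ez: "ell (g, 0) = Gf g" unfolding ell_def by (auto simp: zero_fun_def)
    have "\<Psi> (ell (g, 0)) = phi (g, 0)" unfolding \<Psi>_def E_def using Pell[OF z] ellD[OF z] by simp
    then have eq1: "\<Psi> (Gf g) = Lim U (\<lambda>j. Phi j (g j))" using ez unfolding phi_def by (simp add: zero_fun_def)
    have GD: "Gf g \<in> UU.S1.D" by (rule G_D[of g 1, OF gD gn])
    have eq2: "\<Psi> (Gf g) = Lim U (\<lambda>j. g j (u j))" using Pu UU.S1.cn_apply[OF GD] ul by simp
    obtain M where M: "\<And>j. \<bar>g j (u j)\<bar> \<le> M" using Gbound[of g 1 u, OF gD gn ul] by blast
    have PgB: "\<bar>Phi j (g j)\<bar> \<le> 2" for j using Pa[of "g j" j, OF gD] gn[of j] by linarith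
    have "Lim U (\<lambda>j. g j (u j) + 1/2) \<le> Lim U (\<lambda>j. Phi j (g j))"
    proof (rule uf_Lim_le[OF U, of _ "M + 1/2" _ 2])
      fix j
      show "\<bar>g j (u j) + 1/2\<bar> \<le> M + 1/2" using M[of j] by linarith
      show "\<bar>Phi j (g j)\<bar> \<le> 2" by (rule PgB)
      show "g j (u j) + 1/2 \<le> Phi j (g j)" using gval[of j] fb[of j] by linarith
    qed
    moreover have "Lim U (\<lambda>j. g j (u j) + 1/2) = Lim U (\<lambda>j. g j (u j)) + 1/2"
      using uf_Lim_add[of U "\<lambda>j. g j (u j)" M "\<lambda>j. 1/2" "1/2", OF U M] uf_Lim_const[OF U, of "1/2::real"] by simp
    ultimately show False using eq1 eq2 by simp
  qed
  show ?thesis using PsiB claim1 claim2 Wl by blast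
qed


lemma stepA_one:
  assumes nst: "\<not> sstrongly_tauberian (UNIV::'a set) (+) (*\<^sub>R) norm (UNIV::'b set) (+) (*\<^sub>R) norm T"
    and c: "c > 0"
  shows "\<exists>\<Phi> w. \<Phi> \<in> XY.S1.B \<and> (\<forall>f. f \<in> XY.S1.D \<longrightarrow> \<bar>\<Phi> f\<bar> \<le> 2 * XY.S1.dn f)
    \<and> (\<forall>x. \<exists>f\<in>XY.S1.D. XY.S1.dn f \<le> 1 \<and> 1/2 < \<bar>\<Phi> f - f x\<bar>)
    \<and> (\<forall>h. h \<in> XY.S2.D \<longrightarrow> \<bar>XY.biadj \<Phi> h - h w\<bar> \<le> c * XY.S2.dn h)"
proof -
  obtain \<Phi> where P: "\<Phi> \<in> XY.S1.B" and lt: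
    "(INF y\<in>UNIV. XY.S2.bn (\<lambda>g. XY.biadj \<Phi> g - XY.S2.cn y g))
       < c * (INF x\<in>UNIV. XY.S1.bn (\<lambda>f. \<Phi> f - XY.S1.cn x f))"
    using nst c unfolding sstrongly_tauberian_def by (auto simp: not_le)
  define Dx where "Dx x = XY.S1.bn (\<lambda>f. \<Phi> f - XY.S1.cn x f)" for x
  define Dy where "Dy y = XY.S2.bn (\<lambda>g. XY.biadj \<Phi> g - XY.S2.cn y g)" for y
  have PxB: "(\<lambda>f. \<Phi> f - XY.S1.cn x f) \<in> XY.S1.B" for x by (rule XY.S1.B_diff[OF P XY.S1.cn_B]) simp
  have BP: "XY.biadj \<Phi> \<in> XY.S2.B" by (rule XY.biadj_B[OF P])
  have PyB: "(\<lambda>g. XY.biadj \<Phi> g - XY.S2.cn y g) \<in> XY.S2.B" for y by (rule XY.S2.B_diff[OF BP XY.S2.cn_B]) simp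
  have Dx0: "0 \<le> Dx x" for x unfolding Dx_def by (rule XY.S1.bn_nn[OF PxB])
  have Dy0: "0 \<le> Dy y" for y unfolding Dy_def by (rule XY.S2.bn_nn[OF PyB])
  have bx: "bdd_below (range Dx)" unfolding bdd_below_def using Dx0 by blast
  have by': "bdd_below (range Dy)" unfolding bdd_below_def using Dy0 by blast
  define d where "d = (INF x\<in>UNIV. Dx x)"
  have dY0: "0 \<le> (INF y\<in>UNIV. Dy y)" by (rule cINF_greatest) (auto simp: Dy0)
  have lt': "(INF y\<in>UNIV. Dy y) < c * d" using lt unfolding Dx_def Dy_def d_def .
  have dpos: "d > 0"
  proof (rule ccontr)
    assume "\<not> d > 0"
    then have "c * d \<le> 0" using c by (simp add: mult_nonneg_nonpos)
    then show False using lt' dY0 by linarith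
  qed
  obtain x0 where x0: "Dx x0 < 2 * d"
    using cINF_less_iff[OF UNIV_not_empty bx, of "2 * d"] dpos unfolding d_def by auto
  obtain y0 where y0: "Dy y0 < c * d"
    using cINF_less_iff[OF UNIV_not_empty by', of "c * d"] lt' by auto
  define \<Phi>' where "\<Phi>' f = (1/d) * (\<Phi> f - XY.S1.cn x0 f)" for f
  define w where "w = (1/d) *\<^sub>R (y0 - T x0)"
  have P'B: "\<Phi>' \<in> XY.S1.B" unfolding \<Phi>'_def by (rule XY.S1.B_scale[OF PxB])
  have i: "\<bar>\<Phi>' f\<bar> \<le> 2 * XY.S1.dn f" if f: "f \<in> XY.S1.D" for f
  proof -
    have "\<bar>\<Phi> f - XY.S1.cn x0 f\<bar> \<le> Dx x0 * XY.S1.dn f" unfolding Dx_def by (rule XY.S1.bn_bound[OF PxB f])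
    also have "\<dots> \<le> (2 * d) * XY.S1.dn f" using x0 XY.S1.dn_nn[OF f] by (simp add: mult_right_mono)
    finally show ?thesis unfolding \<Phi>'_def using dpos by (simp add: abs_mult divide_le_eq ac_simps)
  qed
  have ii: "\<exists>f\<in>XY.S1.D. XY.S1.dn f \<le> 1 \<and> 1/2 < \<bar>\<Phi>' f - f x\<bar>" for x
  proof -
    define x1 where "x1 = x0 + d *\<^sub>R x"
    have "d \<le> Dx x1" unfolding d_def by (rule cINF_lower[OF bx]) simp
    then have "d/2 < XY.S1.bn (\<lambda>f. \<Phi> f - XY.S1.cn x1 f)" using dpos unfolding Dx_def by simp
    then obtain f where f: "f \<in> XY.S1.D" "XY.S1.dn f \<le> 1" "d/2 < \<bar>\<Phi> f - XY.S1.cn x1 f\<bar>"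
      using XY.S1.bn_approx[OF PxB] by blast
    have "XY.S1.cn x1 f = f x0 + d * f x" unfolding x1_def using XY.S1.cn_apply[OF f(1)] Dlin1[OF sopT f(1)] by simp
    moreover have "XY.S1.cn x0 f = f x0" using XY.S1.cn_apply[OF f(1)] .
    ultimately have "\<Phi>' f - f x = (1/d) * (\<Phi> f - XY.S1.cn x1 f)" unfolding \<Phi>'_def using dpos
      by (simp add: field_simps)
    then have "\<bar>\<Phi>' f - f x\<bar> = \<bar>\<Phi> f - XY.S1.cn x1 f\<bar> / d" using dpos by (simp add: abs_mult)
    then have eqd: "d * (2 * \<bar>\<Phi>' f - f x\<bar>) = 2 * \<bar>\<Phi> f - XY.S1.cn x1 f\<bar>" using dpos by simp
    have "d < 2 * \<bar>\<Phi> f - XY.S1.cn x1 f\<bar>" using f(3) by (simp add: field_simps)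
    then have "d < d * (2 * \<bar>\<Phi>' f - f x\<bar>)" by (simp only: eqd)
    then have "d * 1 < d * (2 * \<bar>\<Phi>' f - f x\<bar>)" by simp
    then have "1 < 2 * \<bar>\<Phi>' f - f x\<bar>" using dpos by (simp only: mult_less_cancel_left_pos)
    then have "1/2 < \<bar>\<Phi>' f - f x\<bar>" by simp
    then show ?thesis using f by blast
  qed
  have iii: "\<bar>XY.biadj \<Phi>' h - h w\<bar> \<le> c * XY.S2.dn h" if h: "h \<in> XY.S2.D" for h
  proof -
    have "XY.biadj \<Phi>' h = (1/d) * (XY.biadj \<Phi> h - h (T x0))"
      using XY.biadj_apply[OF h] XY.S1.cn_apply[OF XY.tc_D[OF h]] unfolding \<Phi>'_def by simp
    moreover have "h w = (1/d) * (h y0 - h (T x0))"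
    proof -
      have m: "h (- T x0) = - h (T x0)" using Dlin2(2)[OF sopT h, of "-1" "T x0"] by simp
      have "h (y0 - T x0) = h y0 - h (T x0)" using Dlin2(1)[OF sopT h, of y0 "- T x0"] m by simp
      then show ?thesis unfolding w_def using Dlin2(2)[OF sopT h, of "1/d" "y0 - T x0"] by simp
    qed
    ultimately have "XY.biadj \<Phi>' h - h w = (1/d) * (XY.biadj \<Phi> h - XY.S2.cn y0 h)"
      using XY.S2.cn_apply[OF h] by (simp add: algebra_simps)
    then have "\<bar>XY.biadj \<Phi>' h - h w\<bar> = \<bar>XY.biadj \<Phi> h - XY.S2.cn y0 h\<bar> / d" using dpos by (simp add: abs_mult)
    also have "\<dots> \<le> Dy y0 * XY.S2.dn h / d" unfolding Dy_def
      using XY.S2.bn_bound[OF PyB h] dpos by (simp add: divide_right_mono)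
    also have "\<dots> \<le> (c * d) * XY.S2.dn h / d"
    proof -
      have "Dy y0 * XY.S2.dn h \<le> (c * d) * XY.S2.dn h" using y0 XY.S2.dn_nn[OF h] by (intro mult_right_mono) auto
      then show ?thesis using dpos by (rule divide_right_mono[OF _ less_imp_le])
    qed
    also have "\<dots> = c * XY.S2.dn h" using dpos by simp
    finally show ?thesis .
  qed
  show ?thesis using P'B i ii iii by blast
qed

end


theorem corollary24:
  fixes T :: "'a::banach \<Rightarrow> 'b::banach" and U :: "nat filter"
  assumes "bounded_linear T"
    and "free_ultrafilter_nat U"
    and "super_tauberian_wrt U T"
  shows "strongly_tauberian T"
proof (rule ccontr)
  assume nst: "\<not> strongly_tauberian T"
  obtain K where sopT: "sop (UNIV::'a set) (+) (*\<^sub>R) norm (UNIV::'b set) (+) (*\<^sub>R) norm T K"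
    using sop_normed[OF assms(1)] by blast
  interpret XY: sop "UNIV::'a set" "(+)" "(*\<^sub>R)" norm "UNIV::'b set" "(+)" "(*\<^sub>R)" norm T K
    by (rule sopT)
  have nst': "\<not> sstrongly_tauberian (UNIV::'a set) (+) (*\<^sub>R) norm (UNIV::'b set) (+) (*\<^sub>R) norm T"
    using nst unfolding strongly_tauberian_def .
  define Pr where "Pr j \<Phi> w \<longleftrightarrow> \<Phi> \<in> XY.S1.B \<and> (\<forall>f. f \<in> XY.S1.D \<longrightarrow> \<bar>\<Phi> f\<bar> \<le> 2 * XY.S1.dn f)
    \<and> (\<forall>x. \<exists>f\<in>XY.S1.D. XY.S1.dn f \<le> 1 \<and> 1/2 < \<bar>\<Phi> f - f x\<bar>)
    \<and> (\<forall>h. h \<in> XY.S2.D \<longrightarrow> \<bar>XY.biadj \<Phi> h - h w\<bar> \<le> 1 / (real j + 1) * XY.S2.dn h)"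
    for j \<Phi> w
  have "\<forall>j. \<exists>p. Pr j (fst p) (snd p)"
  proof
    fix j :: nat
    have "(0::real) < 1 / (real j + 1)" by simp
    from stepA_one[OF sopT assms(2) nst' this] show "\<exists>p. Pr j (fst p) (snd p)"
      unfolding Pr_def by auto
  qed
  then obtain pw where pw: "\<And>j. Pr j (fst (pw j)) (snd (pw j))" by metis
  define Phi where "Phi j = fst (pw j)" for j
  define W where "W j = snd (pw j)" for j
  have "\<exists>\<Psi>\<in>sbidual linf seq_add seq_scale (unorm U). \<Psi> \<notin> scanon linf seq_add seq_scale (unorm U) ` linf \<and>
      sbiadj linf seq_add seq_scale (unorm U) linf seq_add seq_scale (unorm U) (\<lambda>x j. T (x j)) \<Psi>
        \<in> scanon linf seq_add seq_scale (unorm U) ` (linf :: (nat \<Rightarrow> 'b) set)"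
  proof (rule construct[OF sopT assms(2), of Phi W])
    fix j show "Phi j \<in> XY.S1.B" using pw[of j] unfolding Pr_def Phi_def by blast
  next
    fix j f assume "f \<in> XY.S1.D" then show "\<bar>Phi j f\<bar> \<le> 2 * XY.S1.dn f"
      using pw[of j] unfolding Pr_def Phi_def by blast
  next
    fix j x show "\<exists>f\<in>XY.S1.D. XY.S1.dn f \<le> 1 \<and> 1/2 < \<bar>Phi j f - f x\<bar>"
      using pw[of j] unfolding Pr_def Phi_def by blast
  next
    fix j h assume "h \<in> XY.S2.D"
    then show "\<bar>XY.biadj (Phi j) h - h (W j)\<bar> \<le> 1 / (real j + 1) * XY.S2.dn h"
      using pw[of j] unfolding Pr_def Phi_def W_def by blast
  qed
  then show False using assms(3) unfolding super_tauberian_wrt_def stauberian_def by blast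
qed

end
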